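(* Let $p$ be a positive integer, let $T$ be a complete rooted ternary tree, let $H$ be a connected graph with at least $2p$ vertices, and let $V\subseteq V(T(H))$ with $|OC(T,V)|\geq p$. Let $x=tr(|OC(T,V)|)$ and let $SV$ be an ordering (permutation) of $V$. Then $T(H)$ has a witnessing matching for $SV$ of size at least $p\cdot\lfloor (x-tr(p))/2\rfloor$.
   Context: Complete rooted ternary tree of height $h$: a rooted tree in which every root-leaf path has exactly $h$ edges and every non-leaf vertex has exactly 3 children. For real $x\geq 1$, $tr(x)$ is the largest integer $h\geq 0$ such that a complete rooted ternary tree of height $h$ has at most $x$ vertices. Graph $T(H)$: for a tree $T$ and a graph $H$ with $V(H)=\{1,\dots,m\}$, $T(H)$ has vertex set $\{v^i: v\in V(T), 1\le i\le m\}$; for each $v\in V(T)$ the vertices $v^1,\dots,v^m$ span a copy $H^v$ of $H$ ($v^iv^j$ is an edge iff $ij\in E(H)$), and additionally $u^iv^i$ is an edge for each $i$ whenever $uv\in E(T)$. For $V\subseteq V(T(H))$, $OC(T,V)=\{u\in V(T): V(H^u)\cap V\neq\emptyset\}$. Witnessing matching: let $G$ be a graph, $V\subseteq V(G)$ and $SV$ an ordering of $V$. A partition of $SV$ into a prefix $SV_1$ and a suffix $SV_2$ (either may be empty) supports an edge $\{u,v\}$ if either one endpoint lies in $SV_1$ and the other in $SV_2$, or one endpoint lies in $V$ and the other in $V(G)\setminus V$. A matching $M$ of $G$ is witnessing for $SV$ if some partition of $SV$ into a prefix and a suffix supports every edge of $M$. *)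

theory Defs
  imports Main
begin

definition simple_graph :: "'a set \<Rightarrow> 'a set set \<Rightarrow> bool" where
  "simple_graph V E \<longleftrightarrow> (\<forall>e\<in>E. \<exists>u v. e = {u, v} \<and> u \<noteq> v \<and> u \<in> V \<and> v \<in> V)"

definition connected_graph :: "'a set \<Rightarrow> 'a set set \<Rightarrow> bool" where
  "connected_graph V E \<longleftrightarrow> V \<noteq> {} \<and>
     (\<forall>u\<in>V. \<forall>v\<in>V. (u, v) \<in> {(x, y). {x, y} \<in> E}\<^sup>*)"

(* canonical complete rooted ternary tree of height h: vertices are words over {0,1,2}
   of length at most h (root = []), the parent of i#xs is xs *)
definition ctt_verts :: "nat \<Rightarrow> nat list set" where
  "ctt_verts h = {xs. length xs \<le> h \<and> set xs \<subseteq> {0, 1, 2}}"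

definition ctt_edges :: "nat \<Rightarrow> nat list set set" where
  "ctt_edges h = {{xs, i # xs} | xs i. i \<in> {0, 1, 2} \<and> i # xs \<in> ctt_verts h}"

definition complete_ternary_tree :: "'a set \<Rightarrow> 'a set set \<Rightarrow> nat \<Rightarrow> bool" where
  "complete_ternary_tree VT ET h \<longleftrightarrow> simple_graph VT ET \<and>
     (\<exists>f. bij_betw f VT (ctt_verts h) \<and>
          (\<forall>u\<in>VT. \<forall>v\<in>VT. {u, v} \<in> ET \<longleftrightarrow> {f u, f v} \<in> ctt_edges h))"

(* tr x: the largest h such that the complete ternary tree of height h has at most x vertices;
   that tree has 1 + 3 + ... + 3^h vertices *)
definition tr :: "nat \<Rightarrow> nat" where
  "tr x = Max {h. (\<Sum>i\<le>h. (3::nat) ^ i) \<le> x}"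

(* the graph T(H), where V(H) = {1..m} *)
definition TH_verts :: "'a set \<Rightarrow> nat \<Rightarrow> ('a \<times> nat) set" where
  "TH_verts VT m = VT \<times> {1..m}"

definition TH_edges :: "'a set \<Rightarrow> 'a set set \<Rightarrow> nat \<Rightarrow> nat set set \<Rightarrow> ('a \<times> nat) set set" where
  "TH_edges VT ET m EH =
     {{(v, i), (v, j)} | v i j. v \<in> VT \<and> {i, j} \<in> EH} \<union>
     {{(u, i), (v, i)} | u v i. {u, v} \<in> ET \<and> i \<in> {1..m}}"

definition OC :: "'a set \<Rightarrow> ('a \<times> nat) set \<Rightarrow> 'a set" where
  "OC VT V = {u \<in> VT. \<exists>i. (u, i) \<in> V}"

definition is_matching :: "'b set set \<Rightarrow> 'b set set \<Rightarrow> bool" where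
  "is_matching EG M \<longleftrightarrow> M \<subseteq> EG \<and> (\<forall>e\<in>M. \<forall>e'\<in>M. e \<noteq> e' \<longrightarrow> e \<inter> e' = {})"

definition supports :: "'b set \<Rightarrow> 'b list \<Rightarrow> nat \<Rightarrow> 'b set \<Rightarrow> bool" where
  "supports VG SV k e \<longleftrightarrow> (\<exists>u v. e = {u, v} \<and>
     ((u \<in> set (take k SV) \<and> v \<in> set (drop k SV)) \<or>
      (u \<in> set SV \<and> v \<in> VG - set SV)))"

definition witnessing :: "'b set \<Rightarrow> 'b set set \<Rightarrow> 'b list \<Rightarrow> 'b set set \<Rightarrow> bool" where
  "witnessing VG EG SV M \<longleftrightarrow> is_matching EG M \<and>
     (\<exists>k\<le>length SV. \<forall>e\<in>M. supports VG SV k e)"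

end

theory Submission
  imports Defs
begin


definition sz :: "nat \<Rightarrow> nat" where "sz g = (\<Sum>i\<le>g. (3::nat) ^ i)"

lemma sz_0[simp]: "sz 0 = 1" by (simp add: sz_def)

lemma sz_Suc: "sz (Suc g) = 3 * sz g + 1"
proof (induction g)
  case 0 then show ?case by (simp add: sz_def)
next
  case (Suc g)
  have "sz (Suc (Suc g)) = sz (Suc g) + 3 ^ Suc (Suc g)" by (simp add: sz_def)
  also have "\<dots> = 3 * sz g + 1 + 3 * 3 ^ Suc g" using Suc by simp
  also have "\<dots> = 3 * (sz g + 3 ^ Suc g) + 1" by simp
  also have "sz g + 3 ^ Suc g = sz (Suc g)" by (simp add: sz_def)
  finally show ?case .
qed

lemma sz_less: "g < g' \<Longrightarrow> sz g < sz g'"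
proof (induction g' arbitrary: g)
  case 0 then show ?case by simp
next
  case (Suc g')
  show ?case
  proof (cases "g = g'")
    case True then show ?thesis using sz_Suc[of g'] by simp
  next
    case False then have "g < g'" using Suc by simp
    then have "sz g < sz g'" using Suc.IH by blast
    then show ?thesis using sz_Suc[of g'] by simp
  qed
qed

lemma sz_mono: "g \<le> g' \<Longrightarrow> sz g \<le> sz g'"
  using sz_less by (cases "g = g'") (auto intro: less_imp_le)

lemma sz_ge: "g < sz g"
  by (induction g) (auto simp: sz_Suc)

lemma tr_props:
  assumes "n \<ge> 1"
  shows "sz (tr n) \<le> n" "n < sz (Suc (tr n))"
proof -
  let ?S = "{h. sz h \<le> n}"
  have eq: "tr n = Max ?S" unfolding tr_def sz_def by simp
  have fin: "finite ?S"
  proof (rule finite_subset)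
    show "?S \<subseteq> {..n}" using sz_ge by (auto intro: less_imp_le order.strict_trans2 simp: not_le)
  qed simp
  have "0 \<in> ?S" using assms by simp
  then have ne: "?S \<noteq> {}" by blast
  show "sz (tr n) \<le> n" using Max_in[OF fin ne] eq by simp
  show "n < sz (Suc (tr n))"
  proof (rule ccontr)
    assume "\<not> n < sz (Suc (tr n))"
    then have "Suc (tr n) \<in> ?S" by simp
    then have "Suc (tr n) \<le> Max ?S" using Max_ge[OF fin] by blast
    then show False using eq by simp
  qed
qed

definition sw :: "nat \<Rightarrow> nat \<Rightarrow> nat" where "sw q j = sz (q + 2 * j + 1)"
definition Wset :: "nat \<Rightarrow> nat \<Rightarrow> nat set" where
  "Wset p q = {i. \<exists>j. sw q j \<le> i \<and> i < sw q j + p}"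
definition G :: "nat \<Rightarrow> nat \<Rightarrow> nat \<Rightarrow> nat" where
  "G p q n = card {i. i < n \<and> i \<in> Wset p q}"

lemma sw_Suc: "sw q (Suc j) = 9 * sw q j + 4"
  unfolding sw_def by (simp add: sz_Suc[symmetric] sz_Suc)

lemma sw_less: "j < j' \<Longrightarrow> sw q j < sw q j'"
  unfolding sw_def by (rule sz_less) simp

lemma sw_mono: "j \<le> j' \<Longrightarrow> sw q j \<le> sw q j'"
  unfolding sw_def by (rule sz_mono) simp

lemma G_mono: "a \<le> b \<Longrightarrow> G p q a \<le> G p q b"
  unfolding G_def by (rule card_mono) auto

lemma G_add: "G p q (b + c) \<le> G p q b + c"
proof -
  have "{i. i < b + c \<and> i \<in> Wset p q} \<subseteq> {i. i < b \<and> i \<in> Wset p q} \<union> {b..<b+c}" by auto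
  then have "G p q (b + c) \<le> card ({i. i < b \<and> i \<in> Wset p q} \<union> {b..<b+c})"
    unfolding G_def by (intro card_mono) auto
  also have "\<dots> \<le> G p q b + c" unfolding G_def using card_Un_le[of "{i. i < b \<and> i \<in> Wset p q}" "{b..<b+c}"] by simp
  finally show ?thesis .
qed

lemma G_le: "G p q n \<le> n"
  using G_add[of p q 0 n] by (simp add: G_def)

lemma G_zero: assumes "n \<le> sw q 0" shows "G p q n = 0"
proof -
  have "{i. i < n \<and> i \<in> Wset p q} = {}"
  proof (rule ccontr)
    assume "{i. i < n \<and> i \<in> Wset p q} \<noteq> {}"
    then obtain i j where "i < n" "sw q j \<le> i" unfolding Wset_def by auto
    moreover have "sw q 0 \<le> sw q j" by (rule sw_mono) simp
    ultimately show False using assms by linarith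
  qed
  then show ?thesis unfolding G_def by simp
qed

lemma G_F:
  assumes "p < sw q 0"
  shows "p * t \<le> G p q (sz (q + 2 * t))"
proof (induction t)
  case 0 then show ?case by simp
next
  case (Suc t)
  have a: "sz (q + 2 * t) \<le> sw q t" unfolding sw_def by (rule sz_mono) simp
  have "sw q 0 \<le> sw q t" by (rule sw_mono) simp
  then have b: "sw q t + p \<le> sz (q + 2 * Suc t)"
    using assms unfolding sw_def by (simp add: sz_Suc)
  have "{i. i < sz (q + 2 * t) \<and> i \<in> Wset p q} \<union> {sw q t..<sw q t + p}
        \<subseteq> {i. i < sz (q + 2 * Suc t) \<and> i \<in> Wset p q}"
    using a b sz_mono[of "q + 2*t" "q + 2 * Suc t"] unfolding Wset_def by auto
  then have "card ({i. i < sz (q + 2 * t) \<and> i \<in> Wset p q} \<union> {sw q t..<sw q t + p}) \<le> G p q (sz (q + 2 * Suc t))"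
    unfolding G_def by (intro card_mono) auto
  moreover have "card ({i. i < sz (q + 2 * t) \<and> i \<in> Wset p q} \<union> {sw q t..<sw q t + p})
      = G p q (sz (q + 2 * t)) + p"
    unfolding G_def using a by (subst card_Un_disjoint) auto
  ultimately show ?case using Suc by simp
qed

lemma W_window_unique:
  assumes "p < sw q 0" "sw q j \<le> i" "i < sw q j + p" "sw q j' \<le> i" "i < sw q j' + p"
  shows "j = j'"
proof (rule ccontr)
  assume "j \<noteq> j'"
  then consider "j < j'" | "j' < j" by linarith
  then show False
  proof cases
    case 1
    then have "sw q (Suc j) \<le> sw q j'" by (intro sw_mono) simp
    moreover have "sw q 0 \<le> sw q j" by (rule sw_mono) simp
    ultimately show False using assms sw_Suc[of q j] by linarith
  next
    case 2
    then have "sw q (Suc j') \<le> sw q j" by (intro sw_mono) simp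
    moreover have "sw q 0 \<le> sw q j'" by (rule sw_mono) simp
    ultimately show False using assms sw_Suc[of q j'] by linarith
  qed
qed

lemma G_L':
  assumes "p < sw q 0"
  shows "G p q (b + c + 1) \<le> G p q b + max p c"
proof (cases "\<exists>i. b \<le> i \<and> i \<le> b + c \<and> i \<notin> Wset p q")
  case True
  then obtain i where i: "b \<le> i" "i \<le> b + c" "i \<notin> Wset p q" by blast
  have "{i. i < b + c + 1 \<and> i \<in> Wset p q} \<subseteq> {i. i < b \<and> i \<in> Wset p q} \<union> ({b..<b+c+1} - {i})"
    using i by auto
  then have "G p q (b + c + 1) \<le> card ({i. i < b \<and> i \<in> Wset p q} \<union> ({b..<b+c+1} - {i}))"
    unfolding G_def by (intro card_mono) auto
  also have "\<dots> \<le> G p q b + card ({b..<b+c+1} - {i})"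
    unfolding G_def by (rule card_Un_le)
  also have "card ({b..<b+c+1} - {i}) = c" using i by simp
  finally show ?thesis by simp
next
  case False
  then have allW: "\<And>i. b \<le> i \<Longrightarrow> i \<le> b + c \<Longrightarrow> i \<in> Wset p q" by blast
  obtain j where j: "sw q j \<le> b" "b < sw q j + p" using allW[of b] unfolding Wset_def by auto
  have "c + 1 \<le> p"
  proof (rule ccontr)
    assume "\<not> c + 1 \<le> p"
    then have "sw q j + p \<le> b + c" using j by linarith
    then have "sw q j + p \<in> Wset p q" using allW[of "sw q j + p"] j by linarith
    then obtain j' where "sw q j' \<le> sw q j + p" "sw q j + p < sw q j' + p" unfolding Wset_def by auto
    note jj = this
    show False
    proof (cases "j' \<le> j")
      case True then show False using sw_mono[OF True, of q] jj by linarith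
    next
      case False
      then have "sw q (Suc j) \<le> sw q j'" by (intro sw_mono) simp
      moreover have "sw q 0 \<le> sw q j" by (rule sw_mono) simp
      ultimately show False using assms jj sw_Suc[of q j] by linarith
    qed
  qed
  then show ?thesis using G_add[of p q b "c+1"] by simp
qed

lemma G_T:
  assumes "p < sw q 0"
  shows "G p q (3 * b + 1) \<le> G p q b + p"
proof -
  define A where "A = {i. i < 3 * b + 1 \<and> i \<in> Wset p q}"
  define B where "B = {i. i < b \<and> i \<in> Wset p q}"
  define J where "J i = (SOME j. sw q j \<le> i \<and> i < sw q j + p)" for i
  define up where "up i = i + sw q (Suc (J i)) - sw q (J i)" for i
  have A1: "A - {sw q 0..<sw q 0 + p} \<subseteq> up ` B"
  proof
    fix i assume i: "i \<in> A - {sw q 0..<sw q 0 + p}"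
    then obtain j0 where j0: "sw q j0 \<le> i" "i < sw q j0 + p" "i < 3 * b + 1"
      unfolding A_def Wset_def by auto
    have "j0 \<noteq> 0"
    proof
      assume "j0 = 0" then show False using i j0 by auto
    qed
    then obtain j where jj: "j0 = Suc j" by (cases j0) auto
    define i' where "i' = i - sw q (Suc j) + sw q j"
    have sj: "sw q 0 \<le> sw q j" by (rule sw_mono) simp
    have s1: "sw q (Suc j) = 9 * sw q j + 4" by (rule sw_Suc)
    have w: "sw q j \<le> i'" "i' < sw q j + p" using j0 jj unfolding i'_def by auto
    obtain oo where oo: "i = sw q (Suc j) + oo" using j0 jj le_Suc_ex by blast
    have "i' < b" using j0 jj assms sj s1 unfolding i'_def oo by simp
    then have "i' \<in> B" using w unfolding B_def Wset_def by auto
    have "sw q (J i') \<le> i' \<and> i' < sw q (J i') + p"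
      unfolding J_def by (rule someI[of _ j]) (use w in auto)
    then have "J i' = j" using W_window_unique[OF assms, of "J i'" i' j] w by auto
    then have "up i' = i" unfolding up_def i'_def using j0 jj sj s1 by simp
    then show "i \<in> up ` B" using \<open>i' \<in> B\<close> by blast
  qed
  have "A \<subseteq> {sw q 0..<sw q 0 + p} \<union> (A - {sw q 0..<sw q 0 + p})" by auto
  then have "card A \<le> card ({sw q 0..<sw q 0 + p} \<union> (A - {sw q 0..<sw q 0 + p}))"
    unfolding A_def by (intro card_mono) auto
  also have "\<dots> \<le> p + card (A - {sw q 0..<sw q 0 + p})"
    using card_Un_le[of "{sw q 0..<sw q 0 + p}" "A - {sw q 0..<sw q 0 + p}"] by (simp del: Un_Diff_cancel)
  also have "card (A - {sw q 0..<sw q 0 + p}) \<le> card (up ` B)"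
    using A1 by (intro card_mono) (auto simp: B_def)
  also have "\<dots> \<le> card B" by (rule card_image_le) (simp add: B_def)
  finally show ?thesis unfolding G_def A_def B_def by simp
qed




definition sub :: "nat \<Rightarrow> nat list \<Rightarrow> nat list set" where
  "sub h w = {u \<in> ctt_verts h. \<exists>ys. u = ys @ w}"

lemma finite_ctt: "finite (ctt_verts h)"
  unfolding ctt_verts_def
  by (rule finite_subset[OF _ finite_lists_length_le[of "{0,1,2::nat}" h]]) auto

lemma finite_sub: "finite (sub h w)"
  unfolding sub_def using finite_ctt by simp

lemma sub_ctt: "sub h w \<subseteq> ctt_verts h" unfolding sub_def by auto

lemma self_sub: "w \<in> ctt_verts h \<Longrightarrow> w \<in> sub h w"
  unfolding sub_def by auto

lemma child_ctt: "w \<in> ctt_verts h \<Longrightarrow> length w < h \<Longrightarrow> i < 3 \<Longrightarrow> i # w \<in> ctt_verts h"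
  unfolding ctt_verts_def by auto

lemma sub_leaf: "w \<in> ctt_verts h \<Longrightarrow> length w = h \<Longrightarrow> sub h w = {w}"
  unfolding sub_def ctt_verts_def by auto

lemma sub_decomp:
  assumes "w \<in> ctt_verts h" "length w < h"
  shows "sub h w = insert w (sub h (0 # w) \<union> sub h (1 # w) \<union> sub h (2 # w))"
proof
  show "sub h w \<subseteq> insert w (sub h (0 # w) \<union> sub h (1 # w) \<union> sub h (2 # w))"
  proof
    fix u assume "u \<in> sub h w"
    then obtain ys where u: "u \<in> ctt_verts h" "u = ys @ w" unfolding sub_def by auto
    show "u \<in> insert w (sub h (0 # w) \<union> sub h (1 # w) \<union> sub h (2 # w))"
    proof (cases ys rule: rev_exhaust)
      case Nil then show ?thesis using u by simp
    next
      case (snoc zs i)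
      then have "i \<in> set u" using u by simp
      then have "i \<in> {0,1,2}" using u unfolding ctt_verts_def by auto
      moreover have "u = zs @ i # w" using u snoc by simp
      ultimately show ?thesis using u unfolding sub_def by auto
    qed
  qed
next
  show "insert w (sub h (0 # w) \<union> sub h (1 # w) \<union> sub h (2 # w)) \<subseteq> sub h w"
    using assms unfolding sub_def by (auto intro: exI[of _ "_ @ [_]"])
qed

lemma sub_disj:
  assumes "i \<noteq> j" shows "sub h (i # w) \<inter> sub h (j # w) = {}"
proof (rule ccontr)
  assume "sub h (i # w) \<inter> sub h (j # w) \<noteq> {}"
  then obtain zs zs' where "zs @ i # w = zs' @ j # w" unfolding sub_def by auto
  moreover then have "length zs = length zs'" by (metis add_right_cancel length_Cons length_append)
  ultimately show False using assms by auto
qed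

lemma root_notin_child: "w \<notin> sub h (i # w)"
  unfolding sub_def by auto

lemma tl_sub:
  assumes "u \<in> sub h c" "u \<noteq> c" shows "tl u \<in> sub h c"
proof -
  obtain ys where u: "u \<in> ctt_verts h" "u = ys @ c" using assms unfolding sub_def by auto
  then have "ys \<noteq> []" using assms by auto
  then have "tl u = tl ys @ c" using u by simp
  moreover have "set (tl u) \<subseteq> set u" by (cases u) auto
  then have "tl u \<in> ctt_verts h" using u(1) unfolding ctt_verts_def by auto
  ultimately show ?thesis unfolding sub_def by auto
qed

lemma tl_in_sub_up:
  assumes "tl u \<in> sub h c" "u \<in> ctt_verts h" "u \<noteq> []" shows "u \<in> sub h c"
proof -
  obtain ys where "tl u = ys @ c" using assms unfolding sub_def by auto
  then have "u = (hd u # ys) @ c" using assms list.collapse[of u] by simp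
  then show ?thesis using assms unfolding sub_def by blast
qed

lemma card_sub:
  assumes "w \<in> ctt_verts h" shows "card (sub h w) = sz (h - length w)"
  using assms
proof (induction "h - length w" arbitrary: w)
  case 0
  then have "length w = h" unfolding ctt_verts_def by auto
  then show ?case using sub_leaf[OF 0(2)] by simp
next
  case (Suc d)
  have lw: "length w < h" using Suc by simp
  have dd: "d = h - length (i # w)" for i using Suc.hyps(2) by simp
  have c: "i < 3 \<Longrightarrow> card (sub h (i # w)) = sz d" for i
    using Suc.hyps(1)[OF dd[of i]] child_ctt[OF Suc.prems lw] dd[of i] by simp
  have "card (sub h w) = Suc (card (sub h (0 # w) \<union> sub h (1 # w) \<union> sub h (2 # w)))"
    unfolding sub_decomp[OF Suc.prems lw]
    by (subst card_insert_disjoint) (auto simp: finite_sub root_notin_child)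
  also have "card (sub h (0 # w) \<union> sub h (1 # w) \<union> sub h (2 # w)) = 3 * sz d"
    using sub_disj[of 0 1 h w] sub_disj[of 0 2 h w] sub_disj[of 1 2 h w] c[of 0] c[of 1] c[of 2]
    by (simp add: card_Un_disjoint finite_sub Int_Un_distrib2)
  finally have "card (sub h w) = sz (Suc d)" using sz_Suc[of d] by simp
  then show ?case using Suc.hyps(2) by simp
qed




datatype clr = Ac | Bc | Cc

locale TS =
  fixes h m p :: nat and EH :: "nat set set" and inV :: "nat list \<times> nat \<Rightarrow> bool"
    and pre :: "nat \<Rightarrow> nat list \<times> nat \<Rightarrow> bool" and L :: nat
  assumes p_pos: "0 < p" and m_ge: "2 * p \<le> m"
    and EH_in: "\<And>e. e \<in> EH \<Longrightarrow> e \<subseteq> {1..m}"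
    and EH_conn: "\<And>i j. i \<in> {1..m} \<Longrightarrow> j \<in> {1..m} \<Longrightarrow> (i, j) \<in> {(x, y). {x, y} \<in> EH}\<^sup>*"
    and inV_dom: "\<And>x. inV x \<Longrightarrow> fst x \<in> ctt_verts h \<and> snd x \<in> {1..m}"
    and pre_inV: "\<And>k x. pre k x \<Longrightarrow> inV x"
    and pre_mono: "\<And>k k' x. k \<le> k' \<Longrightarrow> pre k x \<Longrightarrow> pre k' x"
    and pre_0: "\<And>x. \<not> pre 0 x"
    and pre_L: "\<And>x. inV x \<Longrightarrow> pre L x"
    and pre_uniq: "\<And>k x y. pre (Suc k) x \<Longrightarrow> \<not> pre k x \<Longrightarrow> pre (Suc k) y \<Longrightarrow> \<not> pre k y \<Longrightarrow> x = y"
begin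

definition col :: "nat \<Rightarrow> nat list \<times> nat \<Rightarrow> clr" where
  "col k x = (if inV x then (if pre k x then Ac else Bc) else Cc)"

definition adj :: "nat list \<times> nat \<Rightarrow> nat list \<times> nat \<Rightarrow> bool" where
  "adj x y \<longleftrightarrow> fst x \<in> ctt_verts h \<and> fst y \<in> ctt_verts h \<and>
     ((snd x = snd y \<and> snd x \<in> {1..m} \<and> (fst x = tl (fst y) \<and> fst y \<noteq> [] \<or> fst y = tl (fst x) \<and> fst x \<noteq> []))
      \<or> (fst x = fst y \<and> {snd x, snd y} \<in> EH))"

definition gedge :: "nat \<Rightarrow> nat list set \<Rightarrow> (nat list \<times> nat) set \<Rightarrow> bool" where
  "gedge k S e \<longleftrightarrow> (\<exists>x y. e = {x, y} \<and> adj x y \<and> col k x \<noteq> col k y \<and> fst x \<in> S \<and> fst y \<in> S)"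

definition mat :: "nat \<Rightarrow> nat list set \<Rightarrow> nat \<Rightarrow> bool" where
  "mat k S n \<longleftrightarrow> (\<exists>M. finite M \<and> n \<le> card M \<and> (\<forall>e\<in>M. gedge k S e) \<and>
      (\<forall>e\<in>M. \<forall>e'\<in>M. e \<noteq> e' \<longrightarrow> e \<inter> e' = {}))"

definition OCw :: "nat list set" where "OCw = {u \<in> ctt_verts h. \<exists>i. inV (u, i)}"

definition fullrows :: "nat \<Rightarrow> nat list set \<Rightarrow> clr \<Rightarrow> nat set" where
  "fullrows k R X = {i \<in> {1..m}. \<forall>u\<in>R. col k (u, i) = X}"

definition dom :: "nat \<Rightarrow> nat list set \<Rightarrow> clr \<Rightarrow> bool" where
  "dom k R X \<longleftrightarrow> m - p < card (fullrows k R X)"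

definition nondom :: "nat \<Rightarrow> nat list set \<Rightarrow> bool" where
  "nondom k R \<longleftrightarrow> (\<forall>X. \<not> dom k R X)"

definition pc :: "nat list set \<Rightarrow> nat list \<Rightarrow> bool" where
  "pc R r \<longleftrightarrow> r \<in> R \<and> R \<subseteq> ctt_verts h \<and> (\<forall>u\<in>R. \<exists>ys. u = ys @ r) \<and> (\<forall>u\<in>R. u \<noteq> r \<longrightarrow> tl u \<in> R)"

lemma col_C: "col k x = Cc \<longleftrightarrow> \<not> inV x" unfolding col_def by auto

lemma gedge_in: "gedge k S e \<Longrightarrow> z \<in> e \<Longrightarrow> fst z \<in> S"
  unfolding gedge_def by auto

lemma mat_zero: "mat k S 0"
  unfolding mat_def by (rule exI[of _ "{}"]) simp

lemma mat_le: assumes "mat k S n" "n' \<le> n" shows "mat k S n'"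
proof -
  obtain M where "finite M" "n \<le> card M" "\<forall>e\<in>M. gedge k S e" "\<forall>e\<in>M. \<forall>e'\<in>M. e \<noteq> e' \<longrightarrow> e \<inter> e' = {}"
    using assms(1) unfolding mat_def by blast
  moreover have "n' \<le> card M" using calculation(2) assms(2) by simp
  ultimately show ?thesis unfolding mat_def by (intro exI[of _ M] conjI)
qed

lemma gedge_mono: "gedge k S e \<Longrightarrow> S \<subseteq> S' \<Longrightarrow> gedge k S' e"
  unfolding gedge_def by blast

lemma mat_mono: assumes "mat k S n" "S \<subseteq> S'" shows "mat k S' n"
proof -
  obtain M where "finite M" "n \<le> card M" "\<forall>e\<in>M. gedge k S e" "\<forall>e\<in>M. \<forall>e'\<in>M. e \<noteq> e' \<longrightarrow> e \<inter> e' = {}"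
    using assms(1) unfolding mat_def by blast
  moreover have "\<forall>e\<in>M. gedge k S' e" using calculation(3) gedge_mono[OF _ assms(2)] by simp
  ultimately show ?thesis unfolding mat_def by (intro exI[of _ M] conjI)
qed

lemma mat_union:
  assumes "mat k S1 a" "mat k S2 b" "S1 \<inter> S2 = {}"
  shows "mat k (S1 \<union> S2) (a + b)"
proof -
  obtain M1 where M1: "finite M1" "a \<le> card M1" "\<forall>e\<in>M1. gedge k S1 e" "\<forall>e\<in>M1. \<forall>e'\<in>M1. e \<noteq> e' \<longrightarrow> e \<inter> e' = {}"
    using assms(1) unfolding mat_def by blast
  obtain M2 where M2: "finite M2" "b \<le> card M2" "\<forall>e\<in>M2. gedge k S2 e" "\<forall>e\<in>M2. \<forall>e'\<in>M2. e \<noteq> e' \<longrightarrow> e \<inter> e' = {}"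
    using assms(2) unfolding mat_def by blast
  have dj: "e1 \<in> M1 \<Longrightarrow> e2 \<in> M2 \<Longrightarrow> e1 \<inter> e2 = {}" for e1 e2
    using M1(3) M2(3) assms(3) gedge_in by blast
  have ne: "e \<in> M1 \<Longrightarrow> e \<noteq> {}" for e using M1(3) unfolding gedge_def by auto
  have "M1 \<inter> M2 = {}"
  proof (rule ccontr)
    assume "M1 \<inter> M2 \<noteq> {}"
    then obtain e where "e \<in> M1" "e \<in> M2" by blast
    then show False using dj[of e e] ne[of e] by simp
  qed
  then have "card (M1 \<union> M2) = card M1 + card M2" using M1(1) M2(1) by (simp add: card_Un_disjoint)
  moreover have "\<forall>e\<in>M1 \<union> M2. gedge k (S1 \<union> S2) e" using M1(3) M2(3) gedge_mono
    by (metis Un_iff sup_ge1 sup_ge2)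
  moreover have "\<forall>e\<in>M1 \<union> M2. \<forall>e'\<in>M1 \<union> M2. e \<noteq> e' \<longrightarrow> e \<inter> e' = {}"
  proof (intro ballI impI)
    fix e e' assume "e \<in> M1 \<union> M2" "e' \<in> M1 \<union> M2" "e \<noteq> e'"
    then show "e \<inter> e' = {}" using M1(4) M2(4) dj[of e e'] dj[of e' e] by blast
  qed
  ultimately have "finite (M1 \<union> M2) \<and> a + b \<le> card (M1 \<union> M2) \<and> (\<forall>e\<in>M1 \<union> M2. gedge k (S1 \<union> S2) e) \<and>
      (\<forall>e\<in>M1 \<union> M2. \<forall>e'\<in>M1 \<union> M2. e \<noteq> e' \<longrightarrow> e \<inter> e' = {})" using M1(1,2) M2(1,2) by simp
  then show ?thesis unfolding mat_def by (rule exI)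
qed

lemma mat_add3:
  assumes "mat k S1 a" "mat k S2 b" "mat k S3 c" "S1 \<inter> S2 = {}" "S1 \<inter> S3 = {}" "S2 \<inter> S3 = {}"
  shows "mat k (S1 \<union> S2 \<union> S3) (a + b + c)"
proof -
  have "(S1 \<union> S2) \<inter> S3 = {}" using assms(5,6) by auto
  then show ?thesis using mat_union[OF mat_union[OF assms(1,2,4)] assms(3)] by simp
qed

lemma fullrows_fin: "finite (fullrows k R X)" unfolding fullrows_def by simp

lemma fullrows_sub: "fullrows k R X \<subseteq> {1..m}" unfolding fullrows_def by auto

lemma card_le_m: "A \<subseteq> {1..m} \<Longrightarrow> card A \<le> m"
  using card_mono[of "{1..m}" A] by simp

lemma fullrows_le: "card (fullrows k R X) \<le> m"
  by (rule card_le_m[OF fullrows_sub])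

lemma dom_sub: "R' \<subseteq> R \<Longrightarrow> dom k R X \<Longrightarrow> dom k R' X"
  unfolding dom_def
  by (rule order.strict_trans2, assumption, rule card_mono[OF fullrows_fin]) (auto simp: fullrows_def)

lemma dom_unique:
  assumes "R \<noteq> {}" "dom k R X" "dom k R Y" shows "X = Y"
proof (rule ccontr)
  assume "X \<noteq> Y"
  then have "fullrows k R X \<inter> fullrows k R Y = {}" using assms(1) unfolding fullrows_def by auto
  then have "card (fullrows k R X) + card (fullrows k R Y) = card (fullrows k R X \<union> fullrows k R Y)"
    by (simp add: card_Un_disjoint fullrows_fin)
  also have "\<dots> \<le> m" by (rule card_le_m) (use fullrows_sub in blast)
  finally show False using assms(2,3) m_ge unfolding dom_def by linarith
qed

lemma dom_C_indep: "dom k R Cc \<longleftrightarrow> dom k' R Cc"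
  unfolding dom_def fullrows_def col_C by simp

lemma nondom_sub: "R' \<subseteq> R \<Longrightarrow> nondom k R' \<Longrightarrow> nondom k R"
  unfolding nondom_def using dom_sub by blast

lemma nondom_mix:
  assumes "P0 \<subseteq> R" "Q0 \<subseteq> R" "P0 \<noteq> {}" "Q0 \<noteq> {}" "dom 0 P0 Cc" "\<not> dom 0 Q0 Cc"
  shows "nondom k R"
  unfolding nondom_def
proof
  fix X show "\<not> dom k R X"
  proof
    assume d: "dom k R X"
    show False
    proof (cases "X = Cc")
      case True
      then show False using dom_sub[OF assms(2) d] assms(6) dom_C_indep by blast
    next
      case False
      have "dom k P0 Cc" using assms(5) dom_C_indep by blast
      then show False using dom_unique[OF assms(3) dom_sub[OF assms(1) d]] False by blast
    qed
  qed
qed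

lemma dom_A_mono:
  assumes "k \<le> k'" "dom k R Ac" shows "dom k' R Ac"
proof -
  have "col k x = Ac \<Longrightarrow> col k' x = Ac" for x
    unfolding col_def using pre_mono[OF assms(1), of x] by (simp split: if_splits)
  then have "fullrows k R Ac \<subseteq> fullrows k' R Ac"
    unfolding fullrows_def by blast
  then show ?thesis using assms(2) card_mono[OF fullrows_fin] unfolding dom_def by (meson order.strict_trans2)
qed

lemma dom_B_mono:
  assumes "k \<le> k'" "dom k' R Bc" shows "dom k R Bc"
proof -
  have "col k' x = Bc \<Longrightarrow> col k x = Bc" for x
    unfolding col_def using pre_mono[OF assms(1), of x] by (auto split: if_splits)
  then have "fullrows k' R Bc \<subseteq> fullrows k R Bc"
    unfolding fullrows_def by blast
  then show ?thesis using assms(2) card_mono[OF fullrows_fin] unfolding dom_def by (meson order.strict_trans2)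
qed

end




lemma rtr_change:
  assumes "(a, b) \<in> {(x, y). {x, y} \<in> E}\<^sup>*" "P a" "\<not> P b"
  shows "\<exists>c d. {c, d} \<in> E \<and> P c \<and> \<not> P d"
  using assms by (induction rule: rtrancl_induct) auto

context TS
begin

lemma col_change_col:
  assumes "u \<in> ctt_verts h" "a \<in> {1..m}" "b \<in> {1..m}" "col k (u, a) \<noteq> col k (u, b)"
  shows "\<exists>x y. adj x y \<and> col k x \<noteq> col k y \<and> fst x = u \<and> fst y = u"
proof -
  obtain c d where cd: "{c, d} \<in> EH" "col k (u, c) = col k (u, a)" "col k (u, d) \<noteq> col k (u, a)"
    using rtr_change[OF EH_conn[OF assms(2,3)], of "\<lambda>c. col k (u, c) = col k (u, a)"] assms(4) by auto
  have "adj (u, c) (u, d)" unfolding adj_def using assms(1) cd(1) by simp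
  then show ?thesis using cd by (intro exI[of _ "(u, c)"] exI[of _ "(u, d)"]) simp
qed

lemma nonconst_mat:
  assumes "finite U" "U \<subseteq> ctt_verts h"
    and nc: "\<forall>u\<in>U. \<exists>a\<in>{1..m}. \<exists>b\<in>{1..m}. col k (u, a) \<noteq> col k (u, b)"
  shows "mat k U (card U)"
proof -
  have "\<forall>u\<in>U. \<exists>xy. adj (fst xy) (snd xy) \<and> col k (fst xy) \<noteq> col k (snd xy) \<and> fst (fst xy) = u \<and> fst (snd xy) = u"
  proof
    fix u assume u: "u \<in> U"
    then obtain a b where "a \<in> {1..m}" "b \<in> {1..m}" "col k (u, a) \<noteq> col k (u, b)" using nc by blast
    then obtain x y where "adj x y \<and> col k x \<noteq> col k y \<and> fst x = u \<and> fst y = u"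
      using col_change_col[of u a b k] u assms(2) by blast
    then show "\<exists>xy. adj (fst xy) (snd xy) \<and> col k (fst xy) \<noteq> col k (snd xy) \<and> fst (fst xy) = u \<and> fst (snd xy) = u"
      by (intro exI[of _ "(x, y)"]) simp
  qed
  then have "\<exists>f. \<forall>u\<in>U. adj (fst (f u)) (snd (f u)) \<and> col k (fst (f u)) \<noteq> col k (snd (f u)) \<and> fst (fst (f u)) = u \<and> fst (snd (f u)) = u"
    by (rule bchoice)
  then obtain f where f: "\<forall>u\<in>U. adj (fst (f u)) (snd (f u)) \<and> col k (fst (f u)) \<noteq> col k (snd (f u)) \<and> fst (fst (f u)) = u \<and> fst (snd (f u)) = u" ..
  define e where "e u = {fst (f u), snd (f u)}" for u
  have fe: "u \<in> U \<Longrightarrow> z \<in> e u \<Longrightarrow> fst z = u" for u z using f unfolding e_def by auto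
  have inj: "inj_on e U"
  proof (rule inj_onI)
    fix u u' assume "u \<in> U" "u' \<in> U" "e u = e u'"
    then show "u = u'" using fe[of u "fst (f u)"] fe[of u' "fst (f u)"] unfolding e_def by auto
  qed
  have "finite (e ` U)" using assms(1) by simp
  moreover have "card U \<le> card (e ` U)" using card_image[OF inj] by simp
  moreover have "\<forall>ee\<in>e ` U. gedge k U ee"
  proof
    fix ee assume "ee \<in> e ` U"
    then obtain u where u: "u \<in> U" "ee = e u" by blast
    then show "gedge k U ee" using f u unfolding e_def gedge_def
      by (intro exI[of _ "fst (f u)"] exI[of _ "snd (f u)"]) auto
  qed
  moreover have "\<forall>ee\<in>e ` U. \<forall>ee'\<in>e ` U. ee \<noteq> ee' \<longrightarrow> ee \<inter> ee' = {}"
  proof (intro ballI impI)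
    fix ee ee' assume "ee \<in> e ` U" "ee' \<in> e ` U" "ee \<noteq> ee'"
    then obtain u u' where "u \<in> U" "u' \<in> U" "ee = e u" "ee' = e u'" by blast
    then show "ee \<inter> ee' = {}" using fe \<open>ee \<noteq> ee'\<close> by blast
  qed
  ultimately show ?thesis unfolding mat_def by (intro exI[of _ "e ` U"] conjI)
qed

lemma pc_sub: "w \<in> ctt_verts h \<Longrightarrow> pc (sub h w) w"
  unfolding pc_def using self_sub sub_ctt tl_sub by (auto simp: sub_def)

lemma pc_minus:
  assumes "w \<in> ctt_verts h" "length w < h" shows "pc (sub h w - sub h (i # w)) w"
  unfolding pc_def
proof (intro conjI ballI impI)
  show "w \<in> sub h w - sub h (i # w)" using self_sub[OF assms(1)] root_notin_child by simp
  show "sub h w - sub h (i # w) \<subseteq> ctt_verts h" using sub_ctt by blast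
  fix u assume u: "u \<in> sub h w - sub h (i # w)"
  then show "\<exists>ys. u = ys @ w" unfolding sub_def by auto
  assume "u \<noteq> w"
  then have t: "tl u \<in> sub h w" using tl_sub u by blast
  obtain ys where "u = ys @ w" "u \<in> ctt_verts h" using u unfolding sub_def by auto
  then have "u \<noteq> []" using \<open>u \<noteq> w\<close> by auto
  then have "tl u \<notin> sub h (i # w)" using tl_in_sub_up[of u h "i # w"] u \<open>u \<in> ctt_verts h\<close> by blast
  then show "tl u \<in> sub h w - sub h (i # w)" using t by blast
qed

lemma tree_bichrom:
  assumes "pc R r" "u \<in> R" "i \<in> {1..m}" "col k (u, i) \<noteq> col k (r, i)"
  shows "\<exists>x y. adj x y \<and> col k x \<noteq> col k y \<and> fst x \<in> R \<and> fst y \<in> R \<and> snd x = i \<and> snd y = i"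
  using assms(2,4)
proof (induction "length u" arbitrary: u rule: less_induct)
  case less
  have "u \<noteq> r" using less.prems by auto
  then have tu: "tl u \<in> R" using assms(1) less.prems(1) unfolding pc_def by blast
  obtain ys where "u = ys @ r" using assms(1) less.prems(1) unfolding pc_def by blast
  then have "u \<noteq> []" using \<open>u \<noteq> r\<close> by auto
  show ?case
  proof (cases "col k (tl u, i) = col k (u, i)")
    case True
    then have "length (tl u) < length u" using \<open>u \<noteq> []\<close> by simp
    then show ?thesis using less.hyps[of "tl u"] tu True less.prems(2) by simp
  next
    case False
    have "adj (tl u, i) (u, i)" unfolding adj_def using \<open>u \<noteq> []\<close> tu less.prems(1) assms(1,3)
      unfolding pc_def by auto
    then show ?thesis using False tu less.prems(1) by (intro exI[of _ "(tl u, i)"] exI[of _ "(u, i)"]) simp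
  qed
qed

lemma tree_bichrom2:
  assumes "pc R r" "u \<in> R" "v \<in> R" "i \<in> {1..m}" "col k (u, i) \<noteq> col k (v, i)"
  shows "\<exists>x y. adj x y \<and> col k x \<noteq> col k y \<and> fst x \<in> R \<and> fst y \<in> R \<and> snd x = i \<and> snd y = i"
proof (cases "col k (u, i) = col k (r, i)")
  case True
  then show ?thesis using tree_bichrom[OF assms(1,3,4)] assms(5) by simp
next
  case False
  then show ?thesis using tree_bichrom[OF assms(1,2,4)] by simp
qed

lemma row_case:
  assumes "pc R r" "I \<subseteq> {1..m}" "p \<le> card I"
    and nm: "\<forall>i\<in>I. \<exists>u\<in>R. \<exists>v\<in>R. col k (u, i) \<noteq> col k (v, i)"
  shows "mat k R p"
proof -
  obtain I' where I': "I' \<subseteq> I" "card I' = p" "finite I'" using obtain_subset_with_card_n[OF assms(3)] by blast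
  have "\<forall>i\<in>I'. \<exists>xy. adj (fst xy) (snd xy) \<and> col k (fst xy) \<noteq> col k (snd xy) \<and> fst (fst xy) \<in> R \<and> fst (snd xy) \<in> R \<and> snd (fst xy) = i \<and> snd (snd xy) = i"
  proof
    fix i assume i: "i \<in> I'"
    then obtain u v where "u \<in> R" "v \<in> R" "col k (u, i) \<noteq> col k (v, i)" using nm I' by blast
    then obtain x y where "adj x y \<and> col k x \<noteq> col k y \<and> fst x \<in> R \<and> fst y \<in> R \<and> snd x = i \<and> snd y = i"
      using tree_bichrom2[OF assms(1), of u v i k] i I' assms(2) by blast
    then show "\<exists>xy. adj (fst xy) (snd xy) \<and> col k (fst xy) \<noteq> col k (snd xy) \<and> fst (fst xy) \<in> R \<and> fst (snd xy) \<in> R \<and> snd (fst xy) = i \<and> snd (snd xy) = i"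
      by (intro exI[of _ "(x, y)"]) simp
  qed
  then have "\<exists>f. \<forall>i\<in>I'. adj (fst (f i)) (snd (f i)) \<and> col k (fst (f i)) \<noteq> col k (snd (f i)) \<and> fst (fst (f i)) \<in> R \<and> fst (snd (f i)) \<in> R \<and> snd (fst (f i)) = i \<and> snd (snd (f i)) = i"
    by (rule bchoice)
  then obtain f where f: "\<forall>i\<in>I'. adj (fst (f i)) (snd (f i)) \<and> col k (fst (f i)) \<noteq> col k (snd (f i)) \<and> fst (fst (f i)) \<in> R \<and> fst (snd (f i)) \<in> R \<and> snd (fst (f i)) = i \<and> snd (snd (f i)) = i" ..
  define e where "e i = {fst (f i), snd (f i)}" for i
  have fe: "i \<in> I' \<Longrightarrow> z \<in> e i \<Longrightarrow> snd z = i" for i z using f unfolding e_def by auto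
  have inj: "inj_on e I'"
  proof (rule inj_onI)
    fix u u' assume "u \<in> I'" "u' \<in> I'" "e u = e u'"
    then show "u = u'" using fe[of u "fst (f u)"] fe[of u' "fst (f u)"] unfolding e_def by auto
  qed
  have "finite (e ` I')" using I' by simp
  moreover have "p \<le> card (e ` I')" using card_image[OF inj] I' by simp
  moreover have "\<forall>ee\<in>e ` I'. gedge k R ee"
  proof
    fix ee assume "ee \<in> e ` I'"
    then obtain u where u: "u \<in> I'" "ee = e u" by blast
    then show "gedge k R ee" using f u unfolding e_def gedge_def
      by (intro exI[of _ "fst (f u)"] exI[of _ "snd (f u)"]) auto
  qed
  moreover have "\<forall>ee\<in>e ` I'. \<forall>ee'\<in>e ` I'. ee \<noteq> ee' \<longrightarrow> ee \<inter> ee' = {}"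
  proof (intro ballI impI)
    fix ee ee' assume "ee \<in> e ` I'" "ee' \<in> e ` I'" "ee \<noteq> ee'"
    then obtain u u' where "u \<in> I'" "u' \<in> I'" "ee = e u" "ee' = e u'" by blast
    then show "ee \<inter> ee' = {}" using fe \<open>ee \<noteq> ee'\<close> by blast
  qed
  ultimately show ?thesis unfolding mat_def by (intro exI[of _ "e ` I'"] conjI)
qed

end



context TS
begin

lemma unit:
  assumes "pc R r" "p \<le> card R" "nondom k R"
  shows "mat k R p"
proof -
  have finR: "finite R" using assms(1) finite_ctt unfolding pc_def by (meson finite_subset)
  have Rc: "R \<subseteq> ctt_verts h" using assms(1) unfolding pc_def by simp
  have rR: "r \<in> R" using assms(1) unfolding pc_def by simp
  define NM where "NM = {i \<in> {1..m}. \<exists>u\<in>R. \<exists>v\<in>R. col k (u, i) \<noteq> col k (v, i)}"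
  show ?thesis
  proof (cases "p \<le> card NM")
    case True
    show ?thesis by (rule row_case[OF assms(1) _ True]) (auto simp: NM_def)
  next
    case False
    define MO where "MO = {1..m} - NM"
    have "card MO = m - card NM" unfolding MO_def by (subst card_Diff_subset) (auto simp: NM_def)
    then have cMO: "m - p < card MO" using False m_ge by linarith
    then have "MO \<noteq> {}" by auto
    then obtain i0 where i0: "i0 \<in> MO" by blast
    have mono: "col k (u, i) = col k (r, i)" if "i \<in> MO" "u \<in> R" for i u
    proof (rule ccontr)
      assume "col k (u, i) \<noteq> col k (r, i)"
      then have "i \<in> NM" using that rR unfolding NM_def MO_def by blast
      then show False using that(1) unfolding MO_def by blast
    qed
    define X where "X = col k (r, i0)"
    show ?thesis
    proof (cases "\<forall>i\<in>MO. col k (r, i) = X")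
      case True
      have "MO \<subseteq> fullrows k R X" unfolding fullrows_def using True mono by (auto simp: MO_def)
      then have "card MO \<le> card (fullrows k R X)" by (intro card_mono fullrows_fin)
      then have "dom k R X" unfolding dom_def using cMO by linarith
      then show ?thesis using assms(3) unfolding nondom_def by blast
    next
      case False
      then obtain j where j: "j \<in> MO" "col k (r, j) \<noteq> X" by blast
      have "\<forall>u\<in>R. \<exists>a\<in>{1..m}. \<exists>b\<in>{1..m}. col k (u, a) \<noteq> col k (u, b)"
      proof
        fix u assume "u \<in> R"
        then have "col k (u, i0) \<noteq> col k (u, j)" using mono[OF i0] mono[OF j(1)] j(2) X_def by simp
        moreover have "i0 \<in> {1..m}" "j \<in> {1..m}" using i0 j(1) MO_def by auto
        ultimately show "\<exists>a\<in>{1..m}. \<exists>b\<in>{1..m}. col k (u, a) \<noteq> col k (u, b)" by blast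
      qed
      then have "mat k R (card R)" by (rule nonconst_mat[OF finR Rc])
      then show ?thesis using assms(2) by (rule mat_le)
    qed
  qed
qed

lemma poor_nonfull:
  assumes "dom 0 R Cc" "u \<in> R" shows "\<exists>j\<in>{1..m}. \<not> inV (u, j)"
proof -
  have "fullrows 0 R Cc \<noteq> {}" using assms(1) unfolding dom_def by (metis card.empty less_nat_zero_code)
  then obtain j where "j \<in> fullrows 0 R Cc" by blast
  then show ?thesis using assms(2) unfolding fullrows_def col_C by blast
qed

lemma partial_col:
  assumes "inV (u, i)" "j \<in> {1..m}" "\<not> inV (u, j)"
  shows "\<exists>a\<in>{1..m}. \<exists>b\<in>{1..m}. col k (u, a) \<noteq> col k (u, b)"
proof -
  have "i \<in> {1..m}" using inV_dom[OF assms(1)] by simp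
  moreover have "col k (u, i) \<noteq> col k (u, j)" using assms(1,3) col_C by metis
  ultimately show ?thesis using assms(2) by blast
qed

lemma poor_mat:
  assumes "R \<subseteq> ctt_verts h" "dom 0 R Cc"
  shows "mat k R (card (OCw \<inter> R))"
proof -
  have "finite (OCw \<inter> R)" using finite_ctt assms(1) by (meson finite_Int finite_subset)
  moreover have "OCw \<inter> R \<subseteq> ctt_verts h" using assms(1) by blast
  moreover have "\<forall>u\<in>OCw \<inter> R. \<exists>a\<in>{1..m}. \<exists>b\<in>{1..m}. col k (u, a) \<noteq> col k (u, b)"
  proof
    fix u assume u: "u \<in> OCw \<inter> R"
    then obtain i where "inV (u, i)" unfolding OCw_def by blast
    moreover obtain j where "j \<in> {1..m}" "\<not> inV (u, j)" using poor_nonfull[OF assms(2)] u by blast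
    ultimately show "\<exists>a\<in>{1..m}. \<exists>b\<in>{1..m}. col k (u, a) \<noteq> col k (u, b)" by (rule partial_col)
  qed
  ultimately have "mat k (OCw \<inter> R) (card (OCw \<inter> R))" by (rule nonconst_mat)
  then show ?thesis by (rule mat_mono) blast
qed

lemma partial_mat1:
  assumes "u \<in> ctt_verts h" "inV (u, i)" "j \<in> {1..m}" "\<not> inV (u, j)"
  shows "mat k {u} 1"
proof -
  have "mat k {u} (card {u})"
    by (rule nonconst_mat) (use assms partial_col in auto)
  then show ?thesis by simp
qed

lemma rich_nonOC:
  assumes "pc R r" "\<not> dom 0 R Cc" "v \<in> R" "v \<notin> OCw"
  shows "mat k R p"
proof -
  have vc: "v \<in> ctt_verts h" using assms(1,3) unfolding pc_def by blast
  then have nv: "\<not> inV (v, i)" for i using assms(4) unfolding OCw_def by blast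
  define I where "I = {1..m} - fullrows k R Cc"
  have "card I = m - card (fullrows k R Cc)" unfolding I_def
    by (subst card_Diff_subset) (auto simp: fullrows_def fullrows_fin)
  moreover have "card (fullrows k R Cc) \<le> m - p" using assms(2) dom_C_indep[of 0 R k] unfolding dom_def by linarith
  ultimately have cI: "p \<le> card I" using m_ge by linarith
  show ?thesis
  proof (rule row_case[OF assms(1) _ cI])
    show "I \<subseteq> {1..m}" unfolding I_def by blast
    show "\<forall>i\<in>I. \<exists>u\<in>R. \<exists>v\<in>R. col k (u, i) \<noteq> col k (v, i)"
    proof
      fix i assume "i \<in> I"
      then obtain u where "u \<in> R" "col k (u, i) \<noteq> Cc" unfolding I_def fullrows_def by auto
      moreover have "col k (v, i) = Cc" using nv col_C by simp
      ultimately show "\<exists>u\<in>R. \<exists>v\<in>R. col k (u, i) \<noteq> col k (v, i)" using assms(3) by metis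
    qed
  qed
qed

lemma Fu_rich:
  assumes "\<forall>i\<in>{1..m}. inV (u, i)" shows "\<not> dom 0 {u} Cc"
proof -
  have "fullrows 0 {u} Cc = {}" using assms unfolding fullrows_def col_C by auto
  then show ?thesis unfolding dom_def by simp
qed

lemma nondom_exists:
  assumes "R \<noteq> {}" "\<not> dom 0 R Cc"
  shows "\<exists>k\<le>L. nondom k R"
proof (cases "dom 0 R Bc")
  case False
  have "fullrows 0 R Ac = {}" using assms(1) pre_0 unfolding fullrows_def col_def by auto
  then have "\<not> dom 0 R Ac" unfolding dom_def by simp
  moreover have "X = Ac \<or> X = Bc \<or> X = Cc" for X by (cases X) auto
  ultimately have "nondom 0 R" unfolding nondom_def using False assms(2) by metis
  then show ?thesis by blast
next
  case True
  have fL: "fullrows L R Bc = {}" using assms(1) pre_L unfolding fullrows_def col_def by auto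
  then have nL: "\<not> dom L R Bc" unfolding dom_def by simp
  define k where "k = (LEAST k. \<not> dom k R Bc)"
  have nk: "\<not> dom k R Bc" unfolding k_def by (rule LeastI[of _ L]) (rule nL)
  have kL: "k \<le> L" unfolding k_def by (rule Least_le) (rule nL)
  have "k \<noteq> 0"
  proof
    assume "k = 0" then show False using nk True by simp
  qed
  then obtain k0 where k0: "k = Suc k0" by (cases k) auto
  have dk0: "dom k0 R Bc" using not_less_Least[of k0 "\<lambda>k. \<not> dom k R Bc"] k0 k_def by auto
  have diff: "fullrows k0 R Bc - fullrows k R Bc \<subseteq> {i}" if ii: "i \<in> fullrows k0 R Bc - fullrows k R Bc" for i
  proof
    fix i' assume i': "i' \<in> fullrows k0 R Bc - fullrows k R Bc"
    obtain u where u: "u \<in> R" "col k (u, i) \<noteq> Bc" "col k0 (u, i) = Bc" using ii unfolding fullrows_def by auto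
    obtain u' where u': "u' \<in> R" "col k (u', i') \<noteq> Bc" "col k0 (u', i') = Bc" using i' unfolding fullrows_def by auto
    have "pre (Suc k0) (u, i)" "\<not> pre k0 (u, i)" using u k0 unfolding col_def by (auto split: if_splits)
    moreover have "pre (Suc k0) (u', i')" "\<not> pre k0 (u', i')" using u' k0 unfolding col_def by (auto split: if_splits)
    ultimately have "(u, i) = (u', i')" using pre_uniq by blast
    then show "i' \<in> {i}" by simp
  qed
  have "card (fullrows k0 R Bc - fullrows k R Bc) \<le> 1"
  proof (cases "fullrows k0 R Bc - fullrows k R Bc = {}")
    case False
    then obtain i where "i \<in> fullrows k0 R Bc - fullrows k R Bc" by blast
    then have "card (fullrows k0 R Bc - fullrows k R Bc) \<le> card {i}" using diff by (intro card_mono) auto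
    then show ?thesis by simp
  next
    case True then show ?thesis by (simp only: card.empty)
  qed
  moreover have "card (fullrows k0 R Bc) \<le> card (fullrows k0 R Bc - fullrows k R Bc) + card (fullrows k R Bc)"
  proof -
    have "fullrows k0 R Bc \<subseteq> (fullrows k0 R Bc - fullrows k R Bc) \<union> fullrows k R Bc" by blast
    then have "card (fullrows k0 R Bc) \<le> card ((fullrows k0 R Bc - fullrows k R Bc) \<union> fullrows k R Bc)"
      by (intro card_mono) (simp_all add: fullrows_fin)
    also have "\<dots> \<le> card (fullrows k0 R Bc - fullrows k R Bc) + card (fullrows k R Bc)" by (rule card_Un_le)
    finally show ?thesis .
  qed
  ultimately have cB: "m - p \<le> card (fullrows k R Bc)" using dk0 unfolding dom_def by linarith
  have "fullrows k R Ac \<inter> fullrows k R Bc = {}" using assms(1) unfolding fullrows_def by auto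
  then have "card (fullrows k R Ac) + card (fullrows k R Bc) \<le> m"
    using card_le_m[of "fullrows k R Ac \<union> fullrows k R Bc"] fullrows_sub
    by (simp add: card_Un_disjoint fullrows_fin)
  then have "\<not> dom k R Ac" using cB m_ge unfolding dom_def by linarith
  moreover have "\<not> dom k R Cc" using assms(2) dom_C_indep by blast
  moreover have "X = Ac \<or> X = Bc \<or> X = Cc" for X by (cases X) auto
  ultimately have "nondom k R" unfolding nondom_def using nk by metis
  then show ?thesis using kL by blast
qed

end



context TS
begin

definition nO :: "nat list set \<Rightarrow> nat" where "nO S = card (OCw \<inter> S)"
definition Fu :: "nat list \<Rightarrow> bool" where "Fu u \<longleftrightarrow> (\<forall>i\<in>{1..m}. inV (u, i))"

lemma three_cases:
  fixes x y z :: nat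
  assumes "x < 3" "y < 3" "z < 3" "x \<noteq> y" "x \<noteq> z" "y \<noteq> z"
  shows "{x, y, z} = {0, 1, 2}"
proof -
  have l: "v < 3 \<Longrightarrow> v \<in> {0, 1, 2::nat}" for v by (simp, arith)
  have "{x, y, z} \<subseteq> {0, 1, 2}" using l assms(1-3) by blast
  moreover have "card {x, y, z} = card {0, 1, 2::nat}" using assms(4-6) by simp
  ultimately show ?thesis by (intro card_subset_eq) auto
qed

lemma S_decomp3:
  assumes "w \<in> ctt_verts h" "length w < h" "x < 3" "y < 3" "z < 3" "x \<noteq> y" "x \<noteq> z" "y \<noteq> z"
  shows "sub h w = insert w (sub h (x # w) \<union> sub h (y # w) \<union> sub h (z # w))"
proof -
  have e: "{x, y, z} = {0, 1, 2}" by (rule three_cases[OF assms(3-8)])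
  have "sub h (x # w) \<union> sub h (y # w) \<union> sub h (z # w) = (\<Union>i\<in>{x, y, z}. sub h (i # w))" by auto
  also have "\<dots> = (\<Union>i\<in>{0, 1, 2}. sub h (i # w))" using e by simp
  also have "\<dots> = sub h (0 # w) \<union> sub h (1 # w) \<union> sub h (2 # w)" by auto
  finally show ?thesis using sub_decomp[OF assms(1,2)] by simp
qed

lemma ch_ctt: "w \<in> ctt_verts h \<Longrightarrow> length w < h \<Longrightarrow> i < 3 \<Longrightarrow> i # w \<in> ctt_verts h"
  by (rule child_ctt)

lemma ch_ne: "w \<in> ctt_verts h \<Longrightarrow> length w < h \<Longrightarrow> i < 3 \<Longrightarrow> sub h (i # w) \<noteq> {}"
  using self_sub[OF ch_ctt] by blast

lemma ch_card: "w \<in> ctt_verts h \<Longrightarrow> length w < h \<Longrightarrow> i < 3 \<Longrightarrow> card (sub h (i # w)) = sz (h - Suc (length w))"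
  using card_sub[OF ch_ctt] by simp

lemma nO_le: "S \<subseteq> ctt_verts h \<Longrightarrow> nO S \<le> card S"
  unfolding nO_def using finite_ctt by (intro card_mono) (auto intro: finite_subset)

lemma nO_decomp:
  assumes "w \<in> ctt_verts h" "length w < h" "x < 3" "y < 3" "z < 3" "x \<noteq> y" "x \<noteq> z" "y \<noteq> z"
  shows "nO (sub h w) = (if w \<in> OCw then 1 else 0) + nO (sub h (x # w)) + nO (sub h (y # w)) + nO (sub h (z # w))"
proof -
  let ?X = "sub h (x # w)" and ?Y = "sub h (y # w)" and ?Z = "sub h (z # w)"
  have fin: "finite (OCw \<inter> A)" if "A \<subseteq> ctt_verts h" for A using that finite_ctt by (meson finite_Int finite_subset)
  have "OCw \<inter> sub h w = (OCw \<inter> {w}) \<union> ((OCw \<inter> ?X) \<union> (OCw \<inter> ?Y) \<union> (OCw \<inter> ?Z))"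
    using S_decomp3[OF assms] by auto
  moreover have d1: "(OCw \<inter> ?X) \<inter> (OCw \<inter> ?Y) = {}" "(OCw \<inter> ?X) \<inter> (OCw \<inter> ?Z) = {}" "(OCw \<inter> ?Y) \<inter> (OCw \<inter> ?Z) = {}"
    using sub_disj[of x y h w] sub_disj[of x z h w] sub_disj[of y z h w] assms by auto
  moreover have "(OCw \<inter> {w}) \<inter> ((OCw \<inter> ?X) \<union> (OCw \<inter> ?Y) \<union> (OCw \<inter> ?Z)) = {}"
    using root_notin_child by auto
  moreover have f: "finite (OCw \<inter> ?X)" "finite (OCw \<inter> ?Y)" "finite (OCw \<inter> ?Z)" "finite (OCw \<inter> {w})"
    using fin[OF sub_ctt] by auto
  ultimately have "nO (sub h w) = card (OCw \<inter> {w}) + (card (OCw \<inter> ?X) + card (OCw \<inter> ?Y) + card (OCw \<inter> ?Z))"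
  proof -
    assume e1: "OCw \<inter> sub h w = (OCw \<inter> {w}) \<union> ((OCw \<inter> ?X) \<union> (OCw \<inter> ?Y) \<union> (OCw \<inter> ?Z))"
      and e2: "(OCw \<inter> {w}) \<inter> ((OCw \<inter> ?X) \<union> (OCw \<inter> ?Y) \<union> (OCw \<inter> ?Z)) = {}"
    have c1: "card ((OCw \<inter> ?X) \<union> (OCw \<inter> ?Y)) = card (OCw \<inter> ?X) + card (OCw \<inter> ?Y)"
      by (rule card_Un_disjoint[OF f(1,2) d1(1)])
    have "((OCw \<inter> ?X) \<union> (OCw \<inter> ?Y)) \<inter> (OCw \<inter> ?Z) = {}" using d1(2,3) by blast
    then have c2: "card ((OCw \<inter> ?X) \<union> (OCw \<inter> ?Y) \<union> (OCw \<inter> ?Z)) = card (OCw \<inter> ?X) + card (OCw \<inter> ?Y) + card (OCw \<inter> ?Z)"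
      using card_Un_disjoint[of "(OCw \<inter> ?X) \<union> (OCw \<inter> ?Y)" "OCw \<inter> ?Z"] f c1 by simp
    have "card (OCw \<inter> sub h w) = card (OCw \<inter> {w}) + card ((OCw \<inter> ?X) \<union> (OCw \<inter> ?Y) \<union> (OCw \<inter> ?Z))"
      unfolding e1 by (rule card_Un_disjoint) (use f e2 in auto)
    then show ?thesis unfolding nO_def using c2 by simp
  qed
  moreover have "card (OCw \<inter> {w}) = (if w \<in> OCw then 1 else 0)" by auto
  ultimately show ?thesis unfolding nO_def by simp
qed

end



locale TSQ = TS +
  fixes q :: nat
  assumes pq: "p < sw q 0"
begin

lemma pw_sorted:
  assumes w: "w \<in> ctt_verts h" "length w < h" and xyz: "x < 3" "y < 3" "z < 3" "x \<noteq> y" "x \<noteq> z" "y \<noteq> z"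
    and rx: "\<not> dom 0 (sub h (x # w)) Cc"
    and nd: "nondom kx (sub h (x # w))" "nondom ky (sub h (y # w))" "nondom kz (sub h (z # w))"
    and ks: "kx \<le> ky" "ky \<le> kz"
    and my: "mat ky (sub h (y # w)) n" and cx: "p \<le> card (sub h (x # w))"
  shows "nondom ky (sub h w) \<and> mat ky (sub h w) (n + p)"
proof -
  let ?X = "sub h (x # w)" and ?Y = "sub h (y # w)" and ?Z = "sub h (z # w)"
  define R where "R = sub h w - ?Y"
  have dec: "sub h w = insert w (?X \<union> ?Y \<union> ?Z)" by (rule S_decomp3[OF w xyz])
  have XR: "?X \<subseteq> R" unfolding R_def using dec sub_disj[OF xyz(4), of h w] by blast
  have ZR: "?Z \<subseteq> R" unfolding R_def using dec sub_disj[OF xyz(6), of h w] by blast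
  have pcR: "pc R w" unfolding R_def by (rule pc_minus[OF w])
  have "nondom ky R" unfolding nondom_def
  proof
    fix X show "\<not> dom ky R X"
    proof (cases X)
      case Ac
      show ?thesis
      proof
        assume "dom ky R X"
        then have "dom ky ?Z Ac" using dom_sub[OF ZR] Ac by blast
        then have "dom kz ?Z Ac" by (rule dom_A_mono[OF ks(2)])
        then show False using nd(3) unfolding nondom_def by blast
      qed
    next
      case Bc
      show ?thesis
      proof
        assume "dom ky R X"
        then have "dom ky ?X Bc" using dom_sub[OF XR] Bc by blast
        then have "dom kx ?X Bc" by (rule dom_B_mono[OF ks(1)])
        then show False using nd(1) unfolding nondom_def by blast
      qed
    next
      case Cc
      show ?thesis
      proof
        assume "dom ky R X"
        then have "dom ky ?X Cc" using dom_sub[OF XR] Cc by blast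
        then show False using rx dom_C_indep by blast
      qed
    qed
  qed
  moreover have "p \<le> card R"
  proof -
    have "finite R" unfolding R_def using finite_sub by blast
    then have "card ?X \<le> card R" using XR by (rule card_mono)
    then show ?thesis using cx by linarith
  qed
  ultimately have mR: "mat ky R p" by (intro unit[OF pcR])
  have "R \<inter> ?Y = {}" unfolding R_def by blast
  then have "mat ky (?Y \<union> R) (n + p)" using mat_union[OF my mR] by (simp add: Int_commute)
  moreover have "?Y \<union> R = sub h w" unfolding R_def using dec by blast
  moreover have "nondom ky (sub h w)" using nondom_sub[OF _ nd(2)] dec by blast
  ultimately show ?thesis by simp
qed

lemma pw_mid:
  assumes w: "w \<in> ctt_verts h" "length w < h" and xyz: "x < 3" "y < 3" "z < 3" "x \<noteq> y" "x \<noteq> z" "y \<noteq> z"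
    and rx: "\<not> dom 0 (sub h (x # w)) Cc" and rz: "\<not> dom 0 (sub h (z # w)) Cc"
    and nd: "nondom kx (sub h (x # w))" "nondom ky (sub h (y # w))" "nondom kz (sub h (z # w))"
    and ks: "kx \<le> ky \<and> ky \<le> kz \<or> kz \<le> ky \<and> ky \<le> kx"
    and my: "mat ky (sub h (y # w)) n" and cx: "p \<le> card (sub h (x # w))" "p \<le> card (sub h (z # w))"
  shows "nondom ky (sub h w) \<and> mat ky (sub h w) (n + p)"
  using ks
proof
  assume "kx \<le> ky \<and> ky \<le> kz"
  then show ?thesis using pw_sorted[OF w xyz rx nd _ _ my cx(1)] by blast
next
  assume "kz \<le> ky \<and> ky \<le> kx"
  moreover have d: "z \<noteq> y" "z \<noteq> x" "y \<noteq> x" using xyz by auto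
  ultimately show ?thesis using pw_sorted[OF w xyz(3,2,1) d rz nd(3,2,1) _ _ my cx(2)] by blast
qed

definition ew :: "nat list \<Rightarrow> nat" where "ew u = (if u \<in> OCw \<and> \<not> Fu u then 1 else 0)"

lemma w_mat: "u \<in> ctt_verts h \<Longrightarrow> mat k {u} (ew u)"
proof (cases "u \<in> OCw \<and> \<not> Fu u")
  case True
  assume u: "u \<in> ctt_verts h"
  obtain i where "inV (u, i)" using True unfolding OCw_def by blast
  moreover obtain j where "j \<in> {1..m}" "\<not> inV (u, j)" using True unfolding Fu_def by blast
  ultimately show ?thesis using partial_mat1[OF u] True unfolding ew_def by simp
next
  case False then have "ew u = 0" unfolding ew_def by simp
  then show ?thesis using mat_zero by simp
qed

lemma combine4:
  assumes w: "w \<in> ctt_verts h" "length w < h" and xyz: "x < 3" "y < 3" "z < 3" "x \<noteq> y" "x \<noteq> z" "y \<noteq> z"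
    and m: "mat k {w} e" "mat k (sub h (x # w)) a" "mat k (sub h (y # w)) b" "mat k (sub h (z # w)) c"
  shows "mat k (sub h w) (e + a + b + c)"
proof -
  have "mat k (sub h (x # w) \<union> sub h (y # w) \<union> sub h (z # w)) (a + b + c)"
    by (rule mat_add3[OF m(2-4)]) (use sub_disj xyz in auto)
  then have "mat k ({w} \<union> (sub h (x # w) \<union> sub h (y # w) \<union> sub h (z # w))) (e + (a + b + c))"
    by (intro mat_union[OF m(1)]) (use root_notin_child in auto)
  then show ?thesis using S_decomp3[OF w xyz] by (simp add: add.assoc)
qed

end



context TSQ
begin

lemma sz_gap:
  assumes "sw q 0 < sz (Suc d0)" shows "p < sz d0"
proof -
  have "q + 1 < Suc d0"
  proof (rule ccontr)
    assume "\<not> q + 1 < Suc d0"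
    then have "sz (Suc d0) \<le> sz (q + 1)" by (intro sz_mono) simp
    then show False using assms unfolding sw_def by simp
  qed
  then have "sz (q + 1) \<le> sz d0" by (intro sz_mono) simp
  then show ?thesis using pq unfolding sw_def by simp
qed

lemma step_core:
  assumes w: "w \<in> ctt_verts h" "length w < h" and jcd: "j < 3" "c < 3" "d < 3" "j \<noteq> c" "j \<noteq> d" "c \<noteq> d"
    and rj: "\<not> dom 0 (sub h (j # w)) Cc"
    and IHj: "kj \<le> L" "nondom kj (sub h (j # w))" "mat kj (sub h (j # w)) (G p q (nO (sub h (j # w))))"
    and IHc: "\<not> dom 0 (sub h (c # w)) Cc \<Longrightarrow> \<exists>k\<le>L. nondom k (sub h (c # w)) \<and> mat k (sub h (c # w)) (G p q (nO (sub h (c # w))))"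
    and IHd: "\<not> dom 0 (sub h (d # w)) Cc \<Longrightarrow> \<exists>k\<le>L. nondom k (sub h (d # w)) \<and> mat k (sub h (d # w)) (G p q (nO (sub h (d # w))))"
    and mxc: "\<not> dom 0 (sub h (c # w)) Cc \<Longrightarrow> nO (sub h (c # w)) \<le> nO (sub h (j # w))"
    and mxd: "\<not> dom 0 (sub h (d # w)) Cc \<Longrightarrow> nO (sub h (d # w)) \<le> nO (sub h (j # w))"
    and ord: "\<not> dom 0 (sub h (c # w)) Cc \<Longrightarrow> \<not> dom 0 (sub h (d # w)) Cc"
  shows "\<exists>k\<le>L. nondom k (sub h w) \<and> mat k (sub h w) (G p q (nO (sub h w)))"
proof -
  let ?S = "sub h w" and ?J = "sub h (j # w)" and ?P = "sub h (c # w)" and ?Q = "sub h (d # w)"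
  define a where "a = nO ?J"
  define nc where "nc = nO ?P"
  define nd where "nd = nO ?Q"
  define d0 where "d0 = h - Suc (length w)"
  define n where "n = nO ?S"
  have dec: "?S = insert w (?J \<union> ?P \<union> ?Q)" by (rule S_decomp3[OF w jcd])
  have ndS: "nondom kj ?S" using nondom_sub[OF _ IHj(2)] dec by blast
  have n_eq: "n = (if w \<in> OCw then 1 else 0) + a + nc + nd"
    unfolding n_def a_def nc_def nd_def by (rule nO_decomp[OF w jcd])
  have cJ: "card ?J = sz d0" and cP: "card ?P = sz d0" and cQ: "card ?Q = sz d0"
    unfolding d0_def using ch_card[OF w] jcd by auto
  have aJ: "a \<le> sz d0" unfolding a_def using nO_le[OF sub_ctt] cJ by metis
  have aP: "nc \<le> sz d0" unfolding nc_def using nO_le[OF sub_ctt] cP by metis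
  have aQ: "nd \<le> sz d0" unfolding nd_def using nO_le[OF sub_ctt] cQ by metis
  have cS: "card ?S = sz (Suc d0)" unfolding d0_def using card_sub[OF w(1)] w(2) by (simp add: Suc_diff_Suc)
  have pcJ: "pc ?J (j # w)" "pc ?P (c # w)" "pc ?Q (d # w)" using pc_sub ch_ctt[OF w] jcd by auto
  have neP: "?P \<noteq> {}" "?Q \<noteq> {}" "?J \<noteq> {}" using ch_ne[OF w] jcd by auto
  have ctP: "?P \<subseteq> ctt_verts h" "?Q \<subseteq> ctt_verts h" by (rule sub_ctt)+
  have onlyC: "\<not> (\<not> dom 0 ?P Cc \<and> dom 0 ?Q Cc)" using ord by blast
  have B2: "mat kj ?S (G p q a + p)" if ndR: "nondom kj (?S - ?J)" and pR: "p \<le> sz d0"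
  proof -
    have pcR: "pc (?S - ?J) w" by (rule pc_minus[OF w])
    have "?P \<subseteq> ?S - ?J" using dec sub_disj[OF jcd(4), of h w] by blast
    then have "card ?P \<le> card (?S - ?J)" using finite_sub by (intro card_mono) auto
    then have "p \<le> card (?S - ?J)" using pR cP by linarith
    then have "mat kj (?S - ?J) p" using unit[OF pcR] ndR by blast
    then have "mat kj (?J \<union> (?S - ?J)) (G p q a + p)"
      using mat_union[OF IHj(3)] unfolding a_def by blast
    moreover have "?J \<union> (?S - ?J) = ?S" using dec by blast
    ultimately show ?thesis by simp
  qed
  show ?thesis
  proof (cases "G p q n = 0")
    case True
    then show ?thesis using ndS IHj(1) mat_zero unfolding n_def by metis
  next
    case False
    then have "\<not> n \<le> sw q 0" by (metis G_zero)
    moreover have "n \<le> sz (Suc d0)" using nO_le[OF sub_ctt] cS unfolding n_def by metis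
    ultimately have pd: "p < sz d0" using sz_gap by simp
    consider (PP) "dom 0 ?P Cc" "dom 0 ?Q Cc" | (PR) "dom 0 ?P Cc" "\<not> dom 0 ?Q Cc"
      | (RR) "\<not> dom 0 ?P Cc" "\<not> dom 0 ?Q Cc" using onlyC by blast
    then have "mat kj ?S (G p q n) \<or> (\<exists>k\<le>L. nondom k ?S \<and> mat k ?S (G p q n))"
    proof cases
      case PP
      have mP: "mat kj ?P nc" unfolding nc_def nO_def by (rule poor_mat[OF ctP(1) PP(1)])
      have mQ: "mat kj ?Q nd" unfolding nd_def nO_def by (rule poor_mat[OF ctP(2) PP(2)])
      show ?thesis
      proof (cases "Fu w")
        case True
        have "inV (w, 1)" using True m_ge p_pos unfolding Fu_def by simp
        then have wO: "w \<in> OCw" unfolding OCw_def using w(1) by blast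
        then have nn: "n = a + (nc + nd) + 1" using n_eq by simp
        have "ew w = 0" using True unfolding ew_def by simp
        then have m1: "mat kj ?S (G p q a + nc + nd)"
          using combine4[OF w jcd w_mat[OF w(1)] IHj(3) mP mQ] unfolding a_def by simp
        have "\<not> dom 0 {w} Cc" using Fu_rich True unfolding Fu_def by blast
        moreover have "{w} \<subseteq> ?S - ?J" using dec root_notin_child by blast
        moreover have "?P \<subseteq> ?S - ?J" using dec sub_disj[OF jcd(4), of h w] by blast
        ultimately have "nondom kj (?S - ?J)" using nondom_mix[of ?P "?S - ?J" "{w}"] PP(1) neP by blast
        then have m2: "mat kj ?S (G p q a + p)" using B2 pd by simp
        have "G p q n \<le> G p q a + max p (nc + nd)" unfolding nn by (rule G_L'[OF pq])
        then show ?thesis using m1 m2 mat_le by (cases "p \<le> nc + nd") (auto simp: max_def add.assoc)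
      next
        case False
        then have ew: "ew w = (if w \<in> OCw then 1 else 0)" unfolding ew_def by simp
        have m1: "mat kj ?S (ew w + G p q a + nc + nd)"
          using combine4[OF w jcd w_mat[OF w(1)] IHj(3) mP mQ] unfolding a_def by simp
        have "G p q n \<le> G p q a + (ew w + nc + nd)"
          using G_add[of p q a "ew w + nc + nd"] n_eq ew by (simp add: ac_simps)
        then show ?thesis using m1 mat_le by (simp add: ac_simps)
      qed
    next
      case PR
      have mP: "mat kj ?P nc" unfolding nc_def nO_def by (rule poor_mat[OF ctP(1) PR(1)])
      have "?P \<subseteq> ?S - ?J" using dec sub_disj[OF jcd(4), of h w] by blast
      moreover have "?Q \<subseteq> ?S - ?J" using dec sub_disj[OF jcd(5), of h w] by blast
      ultimately have "nondom kj (?S - ?J)" using nondom_mix[of ?P "?S - ?J" ?Q] PR neP by blast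
      then have m2: "mat kj ?S (G p q a + p)" using B2 pd by simp
      have ndle: "nd \<le> a" using mxd PR(2) unfolding nd_def a_def by blast
      have n3: "n \<le> 1 + a + nc + nd" using n_eq by simp
      show ?thesis
      proof (cases "\<exists>v\<in>?Q. v \<notin> OCw")
        case True
        then obtain v where "v \<in> ?Q" "v \<notin> OCw" by blast
        then have mQ: "mat kj ?Q p" using rich_nonOC[OF pcJ(3) PR(2)] by blast
        have m1: "mat kj ?S (ew w + G p q a + nc + p)"
          using combine4[OF w jcd w_mat[OF w(1)] IHj(3) mP mQ] unfolding a_def by simp
        have "G p q n \<le> G p q (2 * a + 1 + nc)" using n3 ndle by (intro G_mono) simp
        also have "\<dots> \<le> G p q (2 * a + 1) + nc" by (rule G_add)
        also have "\<dots> \<le> G p q (3 * a + 1) + nc" using G_mono[of "2 * a + 1" "3 * a + 1" p q] by simp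
        also have "\<dots> \<le> G p q a + p + nc" using G_T[OF pq, of a] by simp
        finally show ?thesis using m1 mat_le by (simp add: ac_simps)
      next
        case False
        then have "OCw \<inter> ?Q = ?Q" by blast
        then have "nd = sz d0" unfolding nd_def nO_def using cQ by simp
        then have "a = sz d0" using ndle aJ by simp
        then have "n \<le> 3 * a + 1" using n3 aP aQ by simp
        then have "G p q n \<le> G p q (3 * a + 1)" by (rule G_mono)
        also have "\<dots> \<le> G p q a + p" by (rule G_T[OF pq])
        finally show ?thesis using m2 mat_le by blast
      qed
    next
      case RR
      have ndle: "nd \<le> a" using mxd RR(2) unfolding nd_def a_def by blast
      have ncle: "nc \<le> a" using mxc RR(1) unfolding nc_def a_def by blast
      have "n \<le> 3 * a + 1" using n_eq ndle ncle by simp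
      then have "G p q n \<le> G p q (3 * a + 1)" by (rule G_mono)
      also have "\<dots> \<le> G p q a + p" by (rule G_T[OF pq])
      finally have Gn: "G p q n \<le> G p q a + p" .
      show ?thesis
      proof (cases "\<exists>v\<in>?P. v \<notin> OCw")
        case True
        then obtain v where "v \<in> ?P" "v \<notin> OCw" by blast
        then have mP: "mat kj ?P p" using rich_nonOC[OF pcJ(2) RR(1)] by blast
        have m1: "mat kj ?S (ew w + G p q a + p + 0)"
          using combine4[OF w jcd w_mat[OF w(1)] IHj(3) mP mat_zero] unfolding a_def by simp
        have "G p q n \<le> ew w + G p q a + p + 0" using Gn by simp
        then show ?thesis using mat_le[OF m1] by blast
      next
        case Fc: False
        show ?thesis
        proof (cases "\<exists>v\<in>?Q. v \<notin> OCw")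
          case True
          then obtain v where "v \<in> ?Q" "v \<notin> OCw" by blast
          then have mQ: "mat kj ?Q p" using rich_nonOC[OF pcJ(3) RR(2)] by blast
          have m1: "mat kj ?S (ew w + G p q a + 0 + p)"
            using combine4[OF w jcd w_mat[OF w(1)] IHj(3) mat_zero mQ] unfolding a_def by simp
          have "G p q n \<le> ew w + G p q a + 0 + p" using Gn by simp
          then show ?thesis using mat_le[OF m1] by blast
        next
          case False
          then have "OCw \<inter> ?Q = ?Q" by blast
          then have "nd = sz d0" unfolding nd_def nO_def using cQ by simp
          moreover have "OCw \<inter> ?P = ?P" using Fc by blast
          then have "nc = sz d0" unfolding nc_def nO_def using cP by simp
          ultimately have eqs: "nc = a" "nd = a" using ndle aJ by auto
          obtain kc where kc: "kc \<le> L" "nondom kc ?P" "mat kc ?P (G p q a)"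
            using IHc[OF RR(1)] eqs unfolding nc_def by auto
          obtain kd where kd: "kd \<le> L" "nondom kd ?Q" "mat kd ?Q (G p q a)"
            using IHd[OF RR(2)] eqs unfolding nd_def by auto
          have pP: "p \<le> card ?J" "p \<le> card ?P" "p \<le> card ?Q" using pd cJ cP cQ by auto
          have jc: "c \<noteq> j" "d \<noteq> j" "d \<noteq> c" using jcd by auto
          consider (mj) "kc \<le> kj \<and> kj \<le> kd \<or> kd \<le> kj \<and> kj \<le> kc"
            | (mc) "kj \<le> kc \<and> kc \<le> kd \<or> kd \<le> kc \<and> kc \<le> kj"
            | (md) "kj \<le> kd \<and> kd \<le> kc \<or> kc \<le> kd \<and> kd \<le> kj" by linarith
          then show ?thesis
          proof cases
            case mj
            have "nondom kj ?S \<and> mat kj ?S (G p q a + p)"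
              using pw_mid[OF w jcd(2,1,3) jc(1) jcd(6,5) RR(1,2) kc(2) IHj(2) kd(2) mj _ pP(2,3)] IHj(3)
              unfolding a_def by blast
            then show ?thesis using Gn mat_le IHj(1) by blast
          next
            case mc
            have "nondom kc ?S \<and> mat kc ?S (G p q a + p)"
              using pw_mid[OF w jcd(1,2,3) jcd(4,5,6) rj RR(2) IHj(2) kc(2) kd(2) mc kc(3) pP(1,3)]
              by blast
            then show ?thesis using Gn mat_le kc(1) by blast
          next
            case md
            have "nondom kd ?S \<and> mat kd ?S (G p q a + p)"
              using pw_mid[OF w jcd(1,3,2) jcd(5,4) jc(3) rj RR(1) IHj(2) kd(2) kc(2) md kd(3) pP(1,2)]
              by blast
            then show ?thesis using Gn mat_le kd(1) by blast
          qed
        qed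
      qed
    qed
    then show ?thesis using ndS IHj(1) unfolding n_def by blast
  qed
qed

end



context TSQ
begin

lemma G1: "G p q 1 = 0"
proof -
  have "1 \<le> sw q 0" unfolding sw_def using sz_ge[of "q + 1"] by simp
  then show ?thesis by (rule G_zero)
qed

lemma main_ind:
  assumes "w \<in> ctt_verts h" "\<not> dom 0 (sub h w) Cc"
  shows "\<exists>k\<le>L. nondom k (sub h w) \<and> mat k (sub h w) (G p q (nO (sub h w)))"
  using assms
proof (induction "h - length w" arbitrary: w)
  case 0
  then have lw: "length w = h" unfolding ctt_verts_def by auto
  have sw1: "sub h w = {w}" by (rule sub_leaf[OF 0(2) lw])
  obtain k where k: "k \<le> L" "nondom k (sub h w)" using nondom_exists[of "sub h w"] 0(3) sw1 by auto
  have "nO (sub h w) \<le> 1" using nO_le[OF sub_ctt[of h w]] sw1 by simp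
  then have "G p q (nO (sub h w)) = 0" using G1 G_mono[of "nO (sub h w)" 1 p q] by simp
  then show ?case using k mat_zero by metis
next
  case (Suc d)
  have w: "w \<in> ctt_verts h" "length w < h" using Suc by auto
  have IH: "\<not> dom 0 (sub h (i # w)) Cc \<Longrightarrow> \<exists>k\<le>L. nondom k (sub h (i # w)) \<and> mat k (sub h (i # w)) (G p q (nO (sub h (i # w))))"
    if "i < 3" for i
    using Suc.hyps(1)[of "i # w"] Suc.hyps(2) ch_ctt[OF w that] by simp
  define A where "A = {i. i < (3::nat) \<and> \<not> dom 0 (sub h (i # w)) Cc}"
  have finA: "finite A" unfolding A_def by simp
  show ?case
  proof (cases "A = {}")
    case True
    have poor: "i < 3 \<Longrightarrow> dom 0 (sub h (i # w)) Cc" for i using True unfolding A_def by blast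
    obtain k where k: "k \<le> L" "nondom k (sub h w)" using nondom_exists[of "sub h w"] Suc.prems(2) self_sub[OF w(1)] by blast
    have mi: "mat k (sub h (i # w)) (nO (sub h (i # w)))" if "i < 3" for i
      unfolding nO_def by (rule poor_mat[OF sub_ctt poor[OF that]])
    have jcd: "(0::nat) < 3" "(1::nat) < 3" "(2::nat) < 3" "(0::nat) \<noteq> 1" "(0::nat) \<noteq> 2" "(1::nat) \<noteq> 2" by auto
    have m: "mat k (sub h w) (ew w + nO (sub h (0 # w)) + nO (sub h (1 # w)) + nO (sub h (2 # w)))"
      by (rule combine4[OF w jcd w_mat[OF w(1)] mi mi mi]) simp_all
    have ne: "nO (sub h w) = (if w \<in> OCw then 1 else 0) + nO (sub h (0 # w)) + nO (sub h (1 # w)) + nO (sub h (2 # w))"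
      by (rule nO_decomp[OF w jcd])
    define s where "s = nO (sub h (0 # w)) + nO (sub h (1 # w)) + nO (sub h (2 # w))"
    have "G p q (nO (sub h w)) \<le> ew w + s"
    proof (cases "w \<in> OCw \<and> Fu w")
      case True
      then have "nO (sub h w) = 1 + s" "ew w = 0" using ne unfolding s_def ew_def by auto
      then show ?thesis using G_add[of p q 1 s] G1 by simp
    next
      case False
      then have "nO (sub h w) = ew w + s" using ne unfolding s_def ew_def by auto
      then show ?thesis using G_le by metis
    qed
    then have "mat k (sub h w) (G p q (nO (sub h w)))" using mat_le[OF m] unfolding s_def by (simp add: ac_simps)
    then show ?thesis using k by blast
  next
    case False
    define f where "f i = nO (sub h (i # w))" for i
    have "Max (f ` A) \<in> f ` A" using finA False by simp
    then obtain j where jA: "j \<in> A" "f j = Max (f ` A)" by (metis imageE)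
    have jmax: "i \<in> A \<Longrightarrow> f i \<le> f j" for i using jA finA by simp
    have j3: "j < 3" and rj: "\<not> dom 0 (sub h (j # w)) Cc" using jA unfolding A_def by auto
    obtain kj where kj: "kj \<le> L" "nondom kj (sub h (j # w))" "mat kj (sub h (j # w)) (G p q (nO (sub h (j # w))))"
      using IH[OF j3 rj] by blast
    define c where "c = (if j = 0 then 1 else (0::nat))"
    define d where "d = (if j = 2 then 1 else (2::nat))"
    have cd: "c < 3" "d < 3" "j \<noteq> c" "j \<noteq> d" "c \<noteq> d" using j3 unfolding c_def d_def by auto
    have mx: "i < 3 \<Longrightarrow> \<not> dom 0 (sub h (i # w)) Cc \<Longrightarrow> nO (sub h (i # w)) \<le> nO (sub h (j # w))" for i
      using jmax unfolding A_def f_def by blast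
    show ?thesis
    proof (cases "\<not> dom 0 (sub h (c # w)) Cc \<and> dom 0 (sub h (d # w)) Cc")
      case True
      show ?thesis
        by (rule step_core[OF w j3 cd(2,1,4,3) _ rj kj IH[OF cd(2)] IH[OF cd(1)] mx[OF cd(2)] mx[OF cd(1)]])
          (use cd True in auto)
    next
      case False
      show ?thesis
        by (rule step_core[OF w j3 cd(1,2,3,4,5) rj kj IH[OF cd(1)] IH[OF cd(2)] mx[OF cd(1)] mx[OF cd(2)]])
          (use False in auto)
    qed
  qed
qed

end



theorem theorem1:
  fixes p h m :: nat and VT :: "'a set" and ET :: "'a set set" and EH :: "nat set set"
    and V :: "('a \<times> nat) set" and SV :: "('a \<times> nat) list"
  assumes "p > 0"
    and "complete_ternary_tree VT ET h"
    and "simple_graph {1..m} EH" and "connected_graph {1..m} EH" and "m \<ge> 2 * p"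
    and "V \<subseteq> TH_verts VT m"
    and "card (OC VT V) \<ge> p"
    and "distinct SV" and "set SV = V"
  shows "\<exists>M. witnessing (TH_verts VT m) (TH_edges VT ET m EH) SV M \<and>
           int p * ((int (tr (card (OC VT V))) - int (tr p)) div 2) \<le> int (card M)"
proof -
  note a = assms
  obtain f where fb: "bij_betw f VT (ctt_verts h)"
    and fe: "\<forall>u\<in>VT. \<forall>v\<in>VT. {u, v} \<in> ET \<longleftrightarrow> {f u, f v} \<in> ctt_edges h"
    using a(2) unfolding complete_ternary_tree_def by blast
  define g where "g = inv_into VT f"
  have gV: "w \<in> ctt_verts h \<Longrightarrow> g w \<in> VT" for w
    unfolding g_def using fb by (metis bij_betw_def inv_into_into)
  have fg: "w \<in> ctt_verts h \<Longrightarrow> f (g w) = w" for w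
    unfolding g_def using fb by (simp add: bij_betw_inv_into_right)
  have ginj: "inj_on g (ctt_verts h)" by (rule inj_on_inverseI[of _ f]) (simp add: fg)
  define phi where "phi x = (g (fst x), snd x)" for x :: "nat list \<times> nat"
  define D where "D = {x :: nat list \<times> nat. fst x \<in> ctt_verts h}"
  have phinj: "inj_on phi D"
  proof (rule inj_onI)
    fix y z assume yz: "y \<in> D" "z \<in> D" "phi y = phi z"
    then have "g (fst y) = g (fst z)" "snd y = snd z" unfolding phi_def by auto
    then have "fst y = fst z" using inj_onD[OF ginj] yz(1,2) unfolding D_def by blast
    then show "y = z" using \<open>snd y = snd z\<close> by (simp add: prod_eq_iff)
  qed
  define inV where "inV x \<longleftrightarrow> fst x \<in> ctt_verts h \<and> phi x \<in> V" for x
  define pre where "pre k x \<longleftrightarrow> inV x \<and> phi x \<in> set (take k SV)" for k x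
  define q where "q = tr p"
  have EHm: "e \<subseteq> {1..m}" if "e \<in> EH" for e
  proof -
    have "\<forall>e\<in>EH. \<exists>u v. e = {u, v} \<and> u \<noteq> v \<and> u \<in> {1..m} \<and> v \<in> {1..m}"
      using a(3) unfolding simple_graph_def .
    then have "\<exists>u v. e = {u, v} \<and> u \<noteq> v \<and> u \<in> {1..m} \<and> v \<in> {1..m}" using that by (rule bspec)
    then obtain u v where "e = {u, v}" "u \<in> {1..m}" "v \<in> {1..m}" by (elim exE conjE)
    then show ?thesis by simp
  qed
  interpret T: TSQ h m p EH inV pre "length SV" q
  proof unfold_locales
    show "0 < p" by (rule a(1))
    show "2 * p \<le> m" by (rule a(5))
    show "\<And>e. e \<in> EH \<Longrightarrow> e \<subseteq> {1..m}" by (rule EHm)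
    show "\<And>i j. i \<in> {1..m} \<Longrightarrow> j \<in> {1..m} \<Longrightarrow> (i, j) \<in> {(x, y). {x, y} \<in> EH}\<^sup>*"
    proof -
      have "\<forall>u\<in>{1..m}. \<forall>v\<in>{1..m}. (u, v) \<in> {(x, y). {x, y} \<in> EH}\<^sup>*"
        using a(4) unfolding connected_graph_def by (rule conjunct2)
      then show "\<And>i j. i \<in> {1..m} \<Longrightarrow> j \<in> {1..m} \<Longrightarrow> (i, j) \<in> {(x, y). {x, y} \<in> EH}\<^sup>*" by blast
    qed
    show "fst x \<in> ctt_verts h \<and> snd x \<in> {1..m}" if "inV x" for x
    proof -
      have "phi x \<in> VT \<times> {1..m}" using a(6) that unfolding inV_def TH_verts_def by blast
      then show ?thesis using that unfolding inV_def phi_def by simp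
    qed
    show "\<And>k x. pre k x \<Longrightarrow> inV x" unfolding pre_def by simp
    show "pre k' x" if "k \<le> k'" "pre k x" for k k' x
      using that set_take_subset_set_take[OF that(1), of SV] unfolding pre_def by blast
    show "\<And>x. \<not> pre 0 x" unfolding pre_def by simp
    show "\<And>x. inV x \<Longrightarrow> pre (length SV) x" unfolding pre_def inV_def using a(9) by simp
    show "\<And>k x y. pre (Suc k) x \<Longrightarrow> \<not> pre k x \<Longrightarrow> pre (Suc k) y \<Longrightarrow> \<not> pre k y \<Longrightarrow> x = y"
    proof -
      fix k x y assume h: "pre (Suc k) x" "\<not> pre k x" "pre (Suc k) y" "\<not> pre k y"
      have kl: "k < length SV"
      proof (rule ccontr)
        assume "\<not> k < length SV"
        then have "take (Suc k) SV = take k SV" by simp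
        then show False using h(1,2) unfolding pre_def by simp
      qed
      have t: "take (Suc k) SV = take k SV @ [SV ! k]" by (rule take_Suc_conv_app_nth[OF kl])
      have "phi x = SV ! k" "phi y = SV ! k" using h t unfolding pre_def by auto
      moreover have "x \<in> D" "y \<in> D" using h unfolding pre_def inV_def D_def by auto
      ultimately show "x = y" using inj_onD[OF phinj] by metis
    qed
    have "p \<ge> 1" using a(1) by simp
    then show "p < sw q 0" unfolding sw_def q_def using tr_props(2)[of p] by simp
  qed
  define N where "N = card (OC VT V)"
  have Npos: "N \<ge> 1" using a(1,7) unfolding N_def by simp
  have OCeq: "g ` T.OCw = OC VT V"
  proof
    show "g ` T.OCw \<subseteq> OC VT V" unfolding T.OCw_def OC_def inV_def phi_def using gV by auto
    show "OC VT V \<subseteq> g ` T.OCw"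
    proof
      fix u assume "u \<in> OC VT V"
      then obtain i where u: "u \<in> VT" "(u, i) \<in> V" unfolding OC_def by blast
      have fu: "f u \<in> ctt_verts h" using fb u(1) bij_betwE by blast
      have gfu: "g (f u) = u" unfolding g_def using fb u(1) by (simp add: bij_betw_inv_into_left)
      have "f u \<in> T.OCw" unfolding T.OCw_def inV_def phi_def using fu gfu u(2) by auto
      then show "u \<in> g ` T.OCw" using gfu by (metis imageI)
    qed
  qed
  have sub0: "sub h [] = ctt_verts h" unfolding sub_def by auto
  have root: "[] \<in> ctt_verts h" unfolding ctt_verts_def by simp
  have nN: "T.nO (sub h []) = N"
  proof -
    have "T.OCw \<subseteq> ctt_verts h" unfolding T.OCw_def by blast
    then have "card (g ` T.OCw) = card T.OCw" using ginj by (metis card_image inj_on_subset)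
    moreover have "T.OCw \<inter> ctt_verts h = T.OCw" unfolding T.OCw_def by blast
    ultimately show ?thesis unfolding T.nO_def sub0 N_def OCeq[symmetric] by simp
  qed
  define x where "x = tr N"
  define t where "t = (x - q) div 2"
  have ptN: "p * t \<le> G p q N"
  proof (cases "t = 0")
    case True then show ?thesis by simp
  next
    case False
    then have "q + 2 * t \<le> x" unfolding t_def by linarith
    then have "sz (q + 2 * t) \<le> sz x" by (rule sz_mono)
    also have "\<dots> \<le> N" unfolding x_def using tr_props(1)[OF Npos] .
    finally have "G p q (sz (q + 2 * t)) \<le> G p q N" by (rule G_mono)
    then show ?thesis using G_F[OF T.pq, of t] by linarith
  qed
  obtain k where k: "k \<le> length SV" "T.mat k (ctt_verts h) (p * t)"
  proof (cases "T.dom 0 (sub h []) Cc")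
    case True
    have "T.mat 0 (sub h []) (card (T.OCw \<inter> sub h []))" by (rule T.poor_mat[OF sub_ctt True])
    then have "T.mat 0 (ctt_verts h) N" using nN unfolding T.nO_def sub0 by simp
    moreover have "p * t \<le> N" using ptN G_le[of p q N] by linarith
    ultimately show ?thesis using that[of 0] T.mat_le by blast
  next
    case False
    obtain k where "k \<le> length SV" "T.mat k (sub h []) (G p q (T.nO (sub h [])))"
      using T.main_ind[OF root False] by blast
    then show ?thesis using that[of k] T.mat_le ptN nN sub0 by metis
  qed
  obtain M where M: "finite M" "p * t \<le> card M" "\<forall>e\<in>M. T.gedge k (ctt_verts h) e"
      "\<forall>e\<in>M. \<forall>e'\<in>M. e \<noteq> e' \<longrightarrow> e \<inter> e' = {}"
    using k(2) unfolding T.mat_def by blast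
  have MD: "e \<in> M \<Longrightarrow> e \<subseteq> D" for e using M(3) T.gedge_in unfolding D_def by blast
  define M' where "M' = (\<lambda>e. phi ` e) ` M"
  have injM: "inj_on (\<lambda>e. phi ` e) M"
    by (rule inj_on_image) (rule inj_on_subset[OF phinj], use MD in blast)
  have cM: "card M' = card M" unfolding M'_def by (rule card_image[OF injM])
  have sV: "set (take k SV) \<subseteq> V" "set (drop k SV) \<subseteq> V" using a(9) by (auto dest: in_set_takeD in_set_dropD)
  have edge: "phi ` e \<in> TH_edges VT ET m EH \<and> supports (TH_verts VT m) SV k (phi ` e)" if e: "e \<in> M" for e
  proof -
    obtain y z where yz: "e = {y, z}" "T.adj y z" "T.col k y \<noteq> T.col k z" "fst y \<in> ctt_verts h" "fst z \<in> ctt_verts h"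
      using M(3) e unfolding T.gedge_def by blast
    have pe: "phi ` e = {phi y, phi z}" using yz(1) by simp
    have sn: "snd y \<in> {1..m} \<and> snd z \<in> {1..m}"
    proof -
      have "(snd y = snd z \<and> snd y \<in> {1..m}) \<or> {snd y, snd z} \<in> EH" using yz(2) unfolding T.adj_def by blast
      then show ?thesis
      proof
        assume "{snd y, snd z} \<in> EH"
        then have "{snd y, snd z} \<subseteq> {1..m}" by (rule EHm)
        then show ?thesis by simp
      qed simp
    qed
    have TH: "phi y \<in> TH_verts VT m" "phi z \<in> TH_verts VT m"
      unfolding TH_verts_def phi_def using gV[OF yz(4)] gV[OF yz(5)] sn by auto
    have "phi ` e \<in> TH_edges VT ET m EH"
    proof -
      have "(snd y = snd z \<and> snd y \<in> {1..m} \<and> (fst y = tl (fst z) \<and> fst z \<noteq> [] \<or> fst z = tl (fst y) \<and> fst y \<noteq> []))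
          \<or> (fst y = fst z \<and> {snd y, snd z} \<in> EH)" using yz(2) unfolding T.adj_def by blast
      then show ?thesis
      proof
        assume r: "snd y = snd z \<and> snd y \<in> {1..m} \<and> (fst y = tl (fst z) \<and> fst z \<noteq> [] \<or> fst z = tl (fst y) \<and> fst y \<noteq> [])"
        have gen: "{tl u, u} \<in> ctt_edges h" if u: "u \<in> ctt_verts h" "u \<noteq> []" for u
        proof -
          have "hd u \<in> set u" using u(2) by simp
          then have hd3: "hd u \<in> {0, 1, 2}" using u(1) unfolding ctt_verts_def by auto
          have uu: "u = hd u # tl u" using u(2) by simp
          have "{tl u, u} = {tl u, hd u # tl u} \<and> hd u \<in> {0, 1, 2} \<and> hd u # tl u \<in> ctt_verts h"
            using hd3 uu u(1) by simp
          then show ?thesis unfolding ctt_edges_def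
            by (intro CollectI exI[of _ "tl u"] exI[of _ "hd u"])
        qed
        have ce: "{fst y, fst z} \<in> ctt_edges h"
        proof (cases "fst y = tl (fst z) \<and> fst z \<noteq> []")
          case True then show ?thesis using gen[OF yz(5)] by simp
        next
          case False
          then have "fst z = tl (fst y) \<and> fst y \<noteq> []" using r by blast
          then have "{fst z, fst y} \<in> ctt_edges h" using gen[OF yz(4)] by simp
          moreover have "{fst z, fst y} = {fst y, fst z}" by blast
          ultimately show ?thesis by simp
        qed
        have "{g (fst y), g (fst z)} \<in> ET \<longleftrightarrow> {f (g (fst y)), f (g (fst z))} \<in> ctt_edges h"
          using fe gV[OF yz(4)] gV[OF yz(5)] by blast
        then have eET: "{g (fst y), g (fst z)} \<in> ET" using ce fg[OF yz(4)] fg[OF yz(5)] by simp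
        have "snd z \<in> {1..m}" using r by simp
        then have "{(g (fst y), snd y), (g (fst z), snd z)} \<in> {{(u, i), (v, i)} | u v i. {u, v} \<in> ET \<and> i \<in> {1..m}}"
          using eET r by (intro CollectI exI[of _ "g (fst y)"] exI[of _ "g (fst z)"] exI[of _ "snd z"]) simp
        then show ?thesis unfolding TH_edges_def pe phi_def by (rule UnI2)
      next
        assume c: "fst y = fst z \<and> {snd y, snd z} \<in> EH"
        then have "{(g (fst y), snd y), (g (fst z), snd z)} \<in> {{(v, i), (v, j)} | v i j. v \<in> VT \<and> {i, j} \<in> EH}"
          using gV[OF yz(4)] by (intro CollectI exI[of _ "g (fst y)"] exI[of _ "snd y"] exI[of _ "snd z"]) simp
        then show ?thesis unfolding TH_edges_def pe phi_def by (rule UnI1)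
      qed
    qed
    moreover have "supports (TH_verts VT m) SV k (phi ` e)"
    proof -
      have colA: "T.col k v = Ac \<Longrightarrow> phi v \<in> set (take k SV)" for v unfolding T.col_def pre_def by (auto split: if_splits)
      have colB: "T.col k v = Bc \<Longrightarrow> phi v \<in> set (drop k SV)" for v
      proof -
        assume "T.col k v = Bc"
        then have "inV v" "\<not> pre k v" unfolding T.col_def by (auto split: if_splits)
        then have "phi v \<in> set SV" "phi v \<notin> set (take k SV)" unfolding pre_def inV_def a(9) by auto
        then show ?thesis by (metis Un_iff append_take_drop_id set_append)
      qed
      have colC: "T.col k v = Cc \<Longrightarrow> fst v \<in> ctt_verts h \<Longrightarrow> phi v \<notin> set SV" for v
        unfolding T.col_def inV_def a(9) by (auto split: if_splits)
      have colV: "T.col k v \<noteq> Cc \<Longrightarrow> phi v \<in> set SV" for v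
        unfolding T.col_def inV_def a(9) by (auto split: if_splits)
      show ?thesis unfolding supports_def pe
      proof (cases "T.col k y")
        case Ac
        show "\<exists>u v. {phi y, phi z} = {u, v} \<and> (u \<in> set (take k SV) \<and> v \<in> set (drop k SV) \<or> u \<in> set SV \<and> v \<in> TH_verts VT m - set SV)"
        proof (cases "T.col k z")
          case Bc
          have "phi y \<in> set (take k SV)" "phi z \<in> set (drop k SV)" using Ac Bc colA colB by auto
          then show ?thesis by (intro exI[of _ "phi y"] exI[of _ "phi z"]) simp
        next
          case Cc
          have "phi y \<in> set SV" "phi z \<in> TH_verts VT m - set SV" using Ac Cc colV colC TH yz(5) by auto
          then show ?thesis by (intro exI[of _ "phi y"] exI[of _ "phi z"]) simp
        qed (use Ac yz(3) in simp)
      next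
        case Bc
        show "\<exists>u v. {phi y, phi z} = {u, v} \<and> (u \<in> set (take k SV) \<and> v \<in> set (drop k SV) \<or> u \<in> set SV \<and> v \<in> TH_verts VT m - set SV)"
        proof (cases "T.col k z")
          case Ac
          have "phi z \<in> set (take k SV)" "phi y \<in> set (drop k SV)" using Ac Bc colA colB by auto
          then show ?thesis by (intro exI[of _ "phi z"] exI[of _ "phi y"]) (simp add: insert_commute)
        next
          case Cc
          have "phi y \<in> set SV" "phi z \<in> TH_verts VT m - set SV" using Bc Cc colV colC TH yz(5) by auto
          then show ?thesis by (intro exI[of _ "phi y"] exI[of _ "phi z"]) simp
        qed (use Bc yz(3) in simp)
      next
        case Cc
        then have "T.col k z \<noteq> Cc" using yz(3) by simp
        then show "\<exists>u v. {phi y, phi z} = {u, v} \<and> (u \<in> set (take k SV) \<and> v \<in> set (drop k SV) \<or> u \<in> set SV \<and> v \<in> TH_verts VT m - set SV)"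
        proof -
          have "phi z \<in> set SV" "phi y \<in> TH_verts VT m - set SV" using Cc \<open>T.col k z \<noteq> Cc\<close> colV colC TH yz(4) by auto
          then show ?thesis by (intro exI[of _ "phi z"] exI[of _ "phi y"]) (simp add: insert_commute)
        qed
      qed
    qed
    ultimately show ?thesis by blast
  qed
  have "witnessing (TH_verts VT m) (TH_edges VT ET m EH) SV M'"
    unfolding witnessing_def is_matching_def
  proof (intro conjI)
    show "M' \<subseteq> TH_edges VT ET m EH"
    proof
      fix e assume "e \<in> M'"
      then obtain d where "d \<in> M" "e = phi ` d" unfolding M'_def by (rule imageE)
      then show "e \<in> TH_edges VT ET m EH" using edge by simp
    qed
    show "\<forall>e\<in>M'. \<forall>e'\<in>M'. e \<noteq> e' \<longrightarrow> e \<inter> e' = {}"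
    proof (intro ballI impI)
      fix e1 e2 assume "e1 \<in> M'" "e2 \<in> M'" "e1 \<noteq> e2"
      obtain d1 where d1: "d1 \<in> M" "e1 = phi ` d1" using \<open>e1 \<in> M'\<close> unfolding M'_def by (rule imageE)
      obtain d2 where d2: "d2 \<in> M" "e2 = phi ` d2" using \<open>e2 \<in> M'\<close> unfolding M'_def by (rule imageE)
      have d: "d1 \<in> M" "d2 \<in> M" "e1 = phi ` d1" "e2 = phi ` d2" using d1 d2 by auto
      then have "d1 \<noteq> d2" using \<open>e1 \<noteq> e2\<close> by auto
      then have "d1 \<inter> d2 = {}" using M(4) d(1,2) by simp
      then show "e1 \<inter> e2 = {}" using inj_on_image_Int[OF phinj MD[OF d(1)] MD[OF d(2)]] d by simp
    qed
    show "\<exists>k\<le>length SV. \<forall>e\<in>M'. supports (TH_verts VT m) SV k e"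
    proof (intro exI[of _ k] conjI ballI)
      show "k \<le> length SV" by (rule k(1))
      fix e assume "e \<in> M'"
      then obtain d where "d \<in> M" "e = phi ` d" unfolding M'_def by (rule imageE)
      then show "supports (TH_verts VT m) SV k e" using edge by simp
    qed
  qed
  moreover have "int p * ((int (tr (card (OC VT V))) - int (tr p)) div 2) \<le> int (card M')"
  proof -
    have "int p * ((int x - int q) div 2) \<le> int (p * t)"
    proof (cases "q \<le> x")
      case True
      then have eq: "int x - int q = int (x - q)" by (rule of_nat_diff[symmetric])
      have e2: "int ((x - q) div 2) = int (x - q) div 2"
        using zdiv_int[of "x - q" 2] by (simp only: of_nat_numeral)
      have "(int x - int q) div 2 = int t" unfolding t_def e2 eq ..
      then show ?thesis by (simp only: of_nat_mult order.refl)
    next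
      case False
      then have "int x - int q \<le> 0" by linarith
      then have "(int x - int q) div 2 \<le> 0" by (rule div_nonpos_pos_le0) simp
      then have "int p * ((int x - int q) div 2) \<le> 0" by (rule mult_nonneg_nonpos[OF of_nat_0_le_iff])
      then show ?thesis by linarith
    qed
    also have "\<dots> \<le> int (card M')" using M(2) cM by (simp only: of_nat_le_iff)
    finally show ?thesis unfolding x_def N_def q_def .
  qed
  ultimately show ?thesis by blast
qed



end
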